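(* Let $n\in\mathbb N$, $r\ge2$, and $\underline m=(m_1,\dots,m_n)\in\mathbb N^n$ with $\gcd(m_i,r)=1$ for all $i$. In the graph $L_{2n-1}\times_{\underline m}\mathbb Z_r$: (i) for $i,j$ with $i+1\le j\le n$, the number of $1$-step $0$-simple paths from $(v_i,0)$ to $(v_j,0)$ is $r$; (ii) for $i,j$ with $i+2\le j\le n$, the number of $2$-step $0$-simple paths from $(v_i,0)$ to $(v_j,0)$ is $\frac{r(r-1)}{2}(j-i-1)$; (iii) for each $i$ with $i+3\le n$, the number of $3$-step $0$-simple paths from $(v_i,0)$ to $(v_{i+3},0)$ is congruent to $-m_{i+2}^{-1}m_{i+1}\frac{r(r-1)(r-2)}{3}$ modulo $r$. Consequently, the number of $0$-simple paths from $(v_i,0)$ to $(v_{i+2},0)$ is $\frac{r(r+1)}{2}$, and the number of $0$-simple paths from $(v_i,0)$ to $(v_{i+3},0)$ is congruent to $-m_{i+2}^{-1}m_{i+1}\frac{r(r-1)(r-2)}{3}$ modulo $r$.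
   Context: $L_{2n-1}\times_{\underline m}\mathbb Z_r$ is the directed graph with vertices $(v_i,k)$ and edges $(e_{i,j},k)$ for $1\le i\le j\le n$, $k\in\mathbb Z_r$, where $s(e_{i,j},k)=(v_i,k-m_i)$ and $r(e_{i,j},k)=(v_j,k)$. A path $\alpha=(e_{i_1,j_1},k_1)\cdots(e_{i_\ell,j_\ell},k_\ell)$ is $0$-simple if $k_1=m_{i_1}$, $k_a\ne0$ for $a\ne\ell$, and $k_\ell=0$ (so it starts at $(v_{i_1},0)$ and ends at $(v_{j_\ell},0)$). A $0$-simple path $\alpha$ is $k$-step if there are integers $t_1<t_2<\dots<t_{k+1}$ with $t_1=i_1$, $t_{k+1}=j_\ell$, such that for each $2\le q\le k$ some edge of $\alpha$ has range in $\{v_{t_q}\}\times\mathbb Z_r$, and all ranges of edges of $\alpha$ lie in $\bigcup_{q=1}^{k+1}\{v_{t_q}\}\times\mathbb Z_r$. For an integer $a$ coprime to $r$, $a^{-1}$ denotes any integer inverse of $a$ modulo $r$. *)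

theory Defs
  imports "HOL-Number_Theory.Cong"
begin

text \<open>The graph L_{2n-1} x_m Z_r.  Vertices (v_i,k) are pairs (i,k) with 1 <= i <= n, k < r
  (k represents a residue mod r).  Edges (e_{i,j},k) are triples (i,j,k) with 1 <= i <= j <= n, k < r.\<close>

type_synonym vert = "nat \<times> nat"
type_synonym edge = "nat \<times> nat \<times> nat"

definition L_edges :: "nat \<Rightarrow> nat \<Rightarrow> edge set" where
  "L_edges n r = {(i, j, k). 1 \<le> i \<and> i \<le> j \<and> j \<le> n \<and> k < r}"

definition L_src :: "nat \<Rightarrow> (nat \<Rightarrow> nat) \<Rightarrow> edge \<Rightarrow> vert" where
  "L_src r m e = (case e of (i, j, k) \<Rightarrow> (i, nat ((int k - int (m i)) mod int r)))"

definition L_rng :: "edge \<Rightarrow> vert" where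
  "L_rng e = (case e of (i, j, k) \<Rightarrow> (j, k))"

definition L_path :: "nat \<Rightarrow> nat \<Rightarrow> (nat \<Rightarrow> nat) \<Rightarrow> edge list \<Rightarrow> bool" where
  "L_path n r m \<alpha> \<longleftrightarrow> \<alpha> \<noteq> [] \<and> set \<alpha> \<subseteq> L_edges n r \<and>
     (\<forall>a. Suc a < length \<alpha> \<longrightarrow> L_rng (\<alpha> ! a) = L_src r m (\<alpha> ! Suc a))"

abbreviation e_i :: "edge \<Rightarrow> nat" where "e_i e \<equiv> fst e"
abbreviation e_j :: "edge \<Rightarrow> nat" where "e_j e \<equiv> fst (snd e)"
abbreviation e_k :: "edge \<Rightarrow> nat" where "e_k e \<equiv> snd (snd e)"

definition zero_simple :: "nat \<Rightarrow> nat \<Rightarrow> (nat \<Rightarrow> nat) \<Rightarrow> edge list \<Rightarrow> bool" where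
  "zero_simple n r m \<alpha> \<longleftrightarrow> L_path n r m \<alpha> \<and>
     e_k (hd \<alpha>) = m (e_i (hd \<alpha>)) mod r \<and>
     (\<forall>a. Suc a < length \<alpha> \<longrightarrow> e_k (\<alpha> ! a) \<noteq> 0) \<and>
     e_k (last \<alpha>) = 0"

definition k_step :: "nat \<Rightarrow> edge list \<Rightarrow> bool" where
  "k_step s \<alpha> \<longleftrightarrow> (\<exists>t :: nat \<Rightarrow> int.
     strict_mono_on {1..s+1} t \<and>
     t 1 = int (e_i (hd \<alpha>)) \<and> t (s+1) = int (e_j (last \<alpha>)) \<and>
     (\<forall>q \<in> {2..s}. \<exists>e \<in> set \<alpha>. int (e_j e) = t q) \<and>
     (\<forall>e \<in> set \<alpha>. int (e_j e) \<in> t ` {1..s+1}))"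

definition zs_paths :: "nat \<Rightarrow> nat \<Rightarrow> (nat \<Rightarrow> nat) \<Rightarrow> nat \<Rightarrow> nat \<Rightarrow> edge list set" where
  "zs_paths n r m i j = {\<alpha>. zero_simple n r m \<alpha> \<and> e_i (hd \<alpha>) = i \<and> e_j (last \<alpha>) = j}"

definition kzs_paths :: "nat \<Rightarrow> nat \<Rightarrow> (nat \<Rightarrow> nat) \<Rightarrow> nat \<Rightarrow> nat \<Rightarrow> nat \<Rightarrow> edge list set" where
  "kzs_paths n r m s i j = {\<alpha>. \<alpha> \<in> zs_paths n r m i j \<and> k_step s \<alpha>}"

end

theory Submission
  imports Defs
begin


definition tt :: "nat \<Rightarrow> nat \<Rightarrow> nat \<Rightarrow> nat" where
  "tt r a x = (LEAST t. 0 < t \<and> (x + t * a) mod r = 0)"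

lemma tt_ex:
  fixes a r x :: nat
  assumes "coprime a r" "r > 0"
  shows "\<exists>t. 0 < t \<and> (x + t * a) mod r = 0"
proof -
  obtain u where u: "[a * u = Suc 0] (mod r)" using cong_solve_coprime_nat[OF assms(1)] by blast
  define t where "t = (r - x mod r) * u + r"
  have "t > 0" using assms(2) by (simp add: t_def)
  have ta: "t * a = (r - x mod r) * (a * u) + r * a"
    unfolding t_def add_mult_distrib by (simp only: mult_ac)
  have "[x + t * a = x + (r - x mod r) * (a * u) + r * a] (mod r)"
    by (simp only: ta add.assoc cong_refl)
  also have "[x + (r - x mod r) * (a * u) + r * a = x + (r - x mod r) * 1 + 0] (mod r)"
    by (intro cong_add cong_refl cong_mult) (use u in \<open>auto simp: cong_def\<close>)
  also have "x + (r - x mod r) * 1 + 0 = r * (x div r + 1)"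
  proof -
    have m: "x mod r < r" using assms(2) by simp
    have e: "x = r * (x div r) + x mod r" by simp
    have "x + (r - x mod r) = r*(x div r) + r" using m e by linarith
    then show ?thesis by (simp add: algebra_simps)
  qed
  finally have "(x + t * a) mod r = (r * (x div r + 1)) mod r" by (simp only: cong_def)
  then have "(x + t * a) mod r = 0" by (metis mod_mult_self1_is_0)
  then show ?thesis using \<open>t > 0\<close> by (intro exI[where x = t] conjI)
qed

lemma tt_spec:
  assumes "coprime a r" "r > 0"
  shows "0 < tt r a x \<and> (x + tt r a x * a) mod r = 0"
  unfolding tt_def by (rule LeastI_ex[OF tt_ex[OF assms]])

lemma tt_min:
  "0 < t \<Longrightarrow> (x + t * a) mod r = 0 \<Longrightarrow> tt r a x \<le> t"
  unfolding tt_def by (rule Least_le) simp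

lemma tt_one:
  "(x + a) mod r = 0 \<Longrightarrow> tt r a x = 1"
  unfolding tt_def by (rule Least_equality) auto

lemma tt_Suc:
  assumes "coprime a r" "r > 0" "(x + a) mod r \<noteq> 0"
  shows "tt r a x = Suc (tt r a ((x + a) mod r))"
proof -
  have e: "(x + Suc t * a) mod r = ((x + a) mod r + t * a) mod r" for t
  proof -
    have "x + Suc t * a = (x + a) + t * a" by simp
    then show ?thesis by (simp only: mod_add_left_eq)
  qed
  obtain t0 where t0: "0 < t0 \<and> (x + t0 * a) mod r = 0" using tt_ex[OF assms(1,2), of x] by (elim exE)
  have "tt r a x = (LEAST t. 0 < t \<and> (x + t * a) mod r = 0)" by (simp add: tt_def)
  also have "\<dots> = Suc (LEAST t. 0 < Suc t \<and> (x + Suc t * a) mod r = 0)"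
    by (rule Least_Suc[of "\<lambda>t. 0 < t \<and> (x + t * a) mod r = 0", OF t0]) simp
  also have "(LEAST t. 0 < Suc t \<and> (x + Suc t * a) mod r = 0) = tt r a ((x + a) mod r)"
    unfolding tt_def e using assms(3)
  proof (intro arg_cong[where f=Least] ext)
    fix t
    show "(0 < Suc t \<and> ((x + a) mod r + t * a) mod r = 0) = (0 < t \<and> ((x + a) mod r + t * a) mod r = 0)"
      using assms(3) by (cases t) auto
  qed
  finally show ?thesis .
qed

lemma tt_zero:
  assumes "coprime a r" "r > 1"
  shows "tt r a 0 = r"
proof -
  have "tt r a 0 \<le> r" by (rule tt_min) (use assms in auto)
  moreover have "r \<le> tt r a 0"
  proof (rule ccontr)
    assume "\<not> r \<le> tt r a 0"
    moreover have "0 < tt r a 0 \<and> (tt r a 0 * a) mod r = 0" using tt_spec[OF assms(1), of 0] assms by simp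
    ultimately have "r dvd tt r a 0 * a" "0 < tt r a 0" "tt r a 0 < r" by (auto simp: mod_0_imp_dvd)
    moreover have "coprime r a" using assms(1) by (simp add: coprime_commute)
    ultimately have "r dvd tt r a 0" using coprime_dvd_mult_left_iff by blast
    then show False using \<open>0 < tt r a 0\<close> \<open>tt r a 0 < r\<close> using dvd_imp_le[of r "tt r a 0"] by linarith
  qed
  ultimately show ?thesis by simp
qed

lemma tt_range:
  assumes "coprime a r" "r > 1" "0 < x" "x < r"
  shows "0 < tt r a x \<and> tt r a x < r"
proof -
  have s: "0 < tt r a x" "(x + tt r a x * a) mod r = 0" using tt_spec[OF assms(1)] assms by auto
  have "tt r a x \<noteq> r"
  proof
    assume "tt r a x = r"
    with s(2) have "(x + r * a) mod r = 0" by simp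
    then show False using assms by simp
  qed
  moreover have "\<not> tt r a x > r"
  proof
    assume h: "tt r a x > r"
    obtain d where d: "0 < d" "r + d = tt r a x" using less_imp_add_positive[OF h] by auto
    have "(x + d * a) mod r = (x + d * a + r * a) mod r" by simp
    also have "x + d * a + r * a = x + tt r a x * a" unfolding d(2)[symmetric] add_mult_distrib by simp
    finally have "tt r a x \<le> d" using s d by (intro tt_min) auto
    then show False using h d assms(2) by linarith
  qed
  ultimately show ?thesis using s by linarith
qed

lemma tt_inj:
  assumes "coprime a r" "r > 0" "x < r" "y < r" "tt r a x = tt r a y"
  shows "x = y"
proof -
  have "(x + tt r a x * a) mod r = (y + tt r a x * a) mod r"
    using tt_spec[OF assms(1,2), of x] tt_spec[OF assms(1,2), of y] assms(5) by simp
  then have "[x + tt r a x * a = y + tt r a x * a] (mod r)" by (simp only: cong_def)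
  then have "[x = y] (mod r)" by (rule cong_add_rcancel_nat[THEN iffD1])
  then show ?thesis using assms by (simp add: cong_def)
qed


fun ok :: "nat \<Rightarrow> (nat \<Rightarrow> nat) \<Rightarrow> nat \<Rightarrow> nat \<Rightarrow> nat list \<Rightarrow> bool" where
  "ok r m v x [] = False"
| "ok r m v x [j] = ((x + m v) mod r = 0)"
| "ok r m v x (j # j2 # js) = ((x + m v) mod r \<noteq> 0 \<and> ok r m j ((x + m v) mod r) (j2 # js))"

definition Wk :: "nat \<Rightarrow> (nat \<Rightarrow> nat) \<Rightarrow> nat \<Rightarrow> nat \<Rightarrow> nat set \<Rightarrow> nat list set" where
  "Wk r m v x U = {js. ok r m v x js \<and> sorted (v # js) \<and> insert v (set js) = U}"

lemma ok_Cons: "ok r m v x (j # js) = (if js = [] then (x + m v) mod r = 0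
   else (x + m v) mod r \<noteq> 0 \<and> ok r m j ((x + m v) mod r) js)"
  by (cases js) auto

lemma Ex_single:
  "Wk r m w x {w} = (if (x + m w) mod r = 0 then {[w]} else Cons w ` Wk r m w ((x + m w) mod r) {w})"
proof (rule set_eqI)
  fix js
  show "js \<in> Wk r m w x {w} \<longleftrightarrow> js \<in> (if (x + m w) mod r = 0 then {[w]} else Cons w ` Wk r m w ((x + m w) mod r) {w})"
  proof (cases js)
    case Nil then show ?thesis by (auto simp: Wk_def)
  next
    case (Cons j rest)
    show ?thesis
      unfolding Cons Wk_def by (cases rest) (auto simp: ok_Cons)
  qed
qed

lemma Ex_rec:
  assumes "v < w" "w \<in> U" "\<forall>u\<in>U. v \<le> u" "v \<in> U" "\<forall>u\<in>U. u \<noteq> v \<longrightarrow> w \<le> u"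
  shows "Wk r m v x U = (if (x + m v) mod r = 0 then (if U = {v,w} then {[w]} else {})
     else Cons v ` Wk r m v ((x + m v) mod r) U \<union> Cons w ` Wk r m w ((x + m v) mod r) (U - {v}))"
proof (rule set_eqI)
  fix js
  show "js \<in> Wk r m v x U \<longleftrightarrow> js \<in> (if (x + m v) mod r = 0 then (if U = {v,w} then {[w]} else {})
     else Cons v ` Wk r m v ((x + m v) mod r) U \<union> Cons w ` Wk r m w ((x + m v) mod r) (U - {v}))"
  proof (cases js)
    case Nil then show ?thesis by (auto simp: Wk_def)
  next
    case (Cons j rest)
    show ?thesis
    proof
      assume "js \<in> Wk r m v x U"
      then have h: "ok r m v x (j # rest)" "sorted (v # j # rest)" "insert v (insert j (set rest)) = U"
        by (auto simp: Wk_def Cons)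
      have jU: "j \<in> U" using h(3) by auto
      show "js \<in> (if (x + m v) mod r = 0 then (if U = {v,w} then {[w]} else {})
         else Cons v ` Wk r m v ((x + m v) mod r) U \<union> Cons w ` Wk r m w ((x + m v) mod r) (U - {v}))"
      proof (cases "j = v")
        case True
        have "rest \<noteq> []" using h(3) assms True by auto
        then show ?thesis using h True by (auto simp: Wk_def Cons ok_Cons)
      next
        case False
        have wset: "w \<in> insert j (set rest)" using assms h(3) by auto
        have "\<forall>y\<in>set rest. j \<le> y" using h(2) by simp
        then have "j \<le> w" using wset by auto
        moreover have "w \<le> j" using assms jU False by auto
        ultimately have jw: "j = w" by simp
        have vr: "v \<notin> set rest" using h(2) assms jw by auto
        show ?thesis
        proof (cases "rest = []")
          case True then show ?thesis using h jw by (auto simp: Wk_def Cons)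
        next
          case False
          have "insert w (set rest) = U - {v}" using h(3) vr jw assms by auto
          then show ?thesis using h jw False assms by (auto simp: Wk_def Cons ok_Cons)
        qed
      qed
    next
      assume a: "js \<in> (if (x + m v) mod r = 0 then (if U = {v,w} then {[w]} else {})
         else Cons v ` Wk r m v ((x + m v) mod r) U \<union> Cons w ` Wk r m w ((x + m v) mod r) (U - {v}))"
      show "js \<in> Wk r m v x U"
      proof (cases "(x + m v) mod r = 0")
        case True then show ?thesis using a assms by (auto simp: Wk_def split: if_splits)
      next
        case False
        then have "js \<in> Cons v ` Wk r m v ((x + m v) mod r) U \<or> js \<in> Cons w ` Wk r m w ((x + m v) mod r) (U - {v})"
          using a by auto
        then show ?thesis
        proof
          assume "js \<in> Cons v ` Wk r m v ((x + m v) mod r) U"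
          then obtain rs where rs: "js = v # rs" "ok r m v ((x + m v) mod r) rs" "sorted (v # rs)" "insert v (set rs) = U"
            by (auto simp: Wk_def)
          have "rs \<noteq> []" using rs(2) by auto
          then show ?thesis using rs False by (auto simp: Wk_def ok_Cons)
        next
          assume "js \<in> Cons w ` Wk r m w ((x + m v) mod r) (U - {v})"
          then obtain rs where rs: "js = w # rs" "ok r m w ((x + m v) mod r) rs" "sorted (w # rs)" "insert w (set rs) = U - {v}"
            by (auto simp: Wk_def)
          have "rs \<noteq> []" using rs(2) by auto
          moreover have "sorted (v # w # rs)" using rs(3) assms(1) by auto
          moreover have "insert v (insert w (set rs)) = U" using rs(4) assms by auto
          ultimately show ?thesis using rs False by (auto simp: Wk_def ok_Cons)
        qed
      qed
    qed
  qed
qed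

lemma mod_step: "((x::nat) + Suc t * a) mod r = ((x + a) mod r + t * a) mod r"
proof -
  have "x + Suc t * a = (x + a) + t * a" by simp
  then show ?thesis by (simp only: mod_add_left_eq)
qed

lemma walk_gen:
  fixes P Q :: "nat \<Rightarrow> nat list set"
  assumes cop: "coprime a r" "r > 0"
    and rec: "\<And>x. x < r \<Longrightarrow> P x = (if (x + a) mod r = 0 then B else Cons v ` P ((x + a) mod r) \<union> Q ((x + a) mod r))"
    and disj: "\<And>y. y < r \<Longrightarrow> Cons v ` P y \<inter> Q y = {}"
    and finB: "finite B" and finQ: "\<And>y. y < r \<Longrightarrow> finite (Q y)"
  shows "x < r \<Longrightarrow> finite (P x) \<and> card (P x) = card B + (\<Sum>s\<in>{1..<tt r a x}. card (Q ((x + s * a) mod r)))"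
proof (induction "tt r a x" arbitrary: x rule: nat_less_induct)
  case 1
  show ?case
  proof (cases "(x + a) mod r = 0")
    case True
    then show ?thesis using rec[OF 1(2)] finB tt_one[OF True] by simp
  next
    case False
    define y where "y = (x + a) mod r"
    have yr: "y < r" using cop by (simp add: y_def)
    have tx: "tt r a x = Suc (tt r a y)" using tt_Suc[OF cop False] by (simp add: y_def)
    have IH: "finite (P y) \<and> card (P y) = card B + (\<Sum>s\<in>{1..<tt r a y}. card (Q ((y + s * a) mod r)))"
      using 1(1) tx yr by auto
    have Px: "P x = Cons v ` P y \<union> Q y" using rec[OF 1(2)] False by (simp add: y_def)
    have fin: "finite (P x)" using Px IH finQ[OF yr] by simp
    have "card (P x) = card (Cons v ` P y) + card (Q y)"
      unfolding Px by (rule card_Un_disjoint) (use IH finQ[OF yr] disj[OF yr] in auto)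
    also have "card (Cons v ` P y) = card (P y)" by (rule card_image) (simp add: inj_on_def)
    also have "(\<Sum>s\<in>{1..<tt r a x}. card (Q ((x + s * a) mod r)))
        = card (Q y) + (\<Sum>s\<in>{1..<tt r a y}. card (Q ((y + s * a) mod r)))"
    proof -
      have "(\<Sum>s\<in>{1..<tt r a x}. card (Q ((x + s * a) mod r))) = (\<Sum>s\<in>{0..<tt r a y}. card (Q ((x + Suc s * a) mod r)))"
        unfolding tx by (subst sum.shift_bounds_Suc_ivl[symmetric]) simp
      also have "\<dots> = (\<Sum>s\<in>{0..<tt r a y}. card (Q ((y + s * a) mod r)))"
        by (intro sum.cong refl) (simp only: y_def mod_step)
      also have "\<dots> = card (Q y) + (\<Sum>s\<in>{1..<tt r a y}. card (Q ((y + s * a) mod r)))"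
        using tt_spec[OF cop, of y] yr by (subst sum.atLeast_Suc_lessThan) auto
      finally show ?thesis .
    qed
    ultimately show ?thesis using fin IH by simp
  qed
qed


lemma Wk_card1:
  assumes "coprime (m w) r" "r > 1" "x < r"
  shows "finite (Wk r m w x {w}) \<and> card (Wk r m w x {w}) = 1"
proof -
  have "finite (Wk r m w x {w}) \<and> card (Wk r m w x {w}) = card {[w]} + (\<Sum>s\<in>{1..<tt r (m w) x}. card ({}::nat list set))"
    by (rule walk_gen[where P = "\<lambda>x. Wk r m w x {w}" and Q = "\<lambda>_. {}" and v = w])
      (use assms Ex_single in auto)
  then show ?thesis by simp
qed

lemma Wk_card2:
  assumes "v < w" "coprime (m v) r" "coprime (m w) r" "r > 1" "x < r"
  shows "finite (Wk r m v x {v,w}) \<and> card (Wk r m v x {v,w}) = tt r (m v) x"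
proof -
  have rec: "Wk r m v y {v,w} = (if (y + m v) mod r = 0 then {[w]}
     else Cons v ` Wk r m v ((y + m v) mod r) {v,w} \<union> Cons w ` Wk r m w ((y + m v) mod r) {w})" for y
    using Ex_rec[of v w "{v,w}" r m y] assms(1) by (simp add: insert_Diff_if)
  have "finite (Wk r m v x {v,w}) \<and> card (Wk r m v x {v,w}) = card {[w]} +
      (\<Sum>s\<in>{1..<tt r (m v) x}. card (Cons w ` Wk r m w ((x + s * m v) mod r) {w}))"
  proof (rule walk_gen[where P = "\<lambda>x. Wk r m v x {v,w}" and Q = "\<lambda>y. Cons w ` Wk r m w y {w}" and v = v])
    show "\<And>y. y < r \<Longrightarrow> Cons v ` Wk r m v y {v, w} \<inter> Cons w ` Wk r m w y {w} = {}"
      using assms(1) by auto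
    show "\<And>y. y < r \<Longrightarrow> finite (Cons w ` Wk r m w y {w})" using Wk_card1 assms by blast
  qed (use assms rec in auto)
  moreover have "card (Cons w ` Wk r m w y {w}) = 1" if "y < r" for y
    using Wk_card1[of m w r y] assms(3,4) that by (simp add: card_image)
  moreover have "0 < tt r (m v) x" using tt_spec[OF assms(2)] assms(4) by simp
  ultimately show ?thesis using assms(4) by simp
qed

lemma Wk_card3:
  assumes "v < w" "w < u" "coprime (m v) r" "coprime (m w) r" "coprime (m u) r" "r > 1" "x < r"
  shows "finite (Wk r m v x {v,w,u}) \<and> card (Wk r m v x {v,w,u}) =
     (\<Sum>s\<in>{1..<tt r (m v) x}. tt r (m w) ((x + s * m v) mod r))"
proof -
  have ne: "{v,w,u} \<noteq> {v,w}"
  proof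
    assume "{v,w,u} = {v,w}"
    moreover have "u \<in> {v,w,u}" by simp
    ultimately have "u \<in> {v,w}" by simp
    then show False using assms(1,2) by simp
  qed
  have rec: "Wk r m v y {v,w,u} = (if (y + m v) mod r = 0 then {}
     else Cons v ` Wk r m v ((y + m v) mod r) {v,w,u} \<union> Cons w ` Wk r m w ((y + m v) mod r) {w,u})" for y
  proof -
    have "{v,w,u} - {v} = {w,u}" using assms(1,2) by auto
    then show ?thesis using Ex_rec[of v w "{v,w,u}" r m y] assms(1,2) ne by simp
  qed
  have "finite (Wk r m v x {v,w,u}) \<and> card (Wk r m v x {v,w,u}) = card ({}::nat list set) +
      (\<Sum>s\<in>{1..<tt r (m v) x}. card (Cons w ` Wk r m w ((x + s * m v) mod r) {w,u}))"
  proof (rule walk_gen[where P = "\<lambda>x. Wk r m v x {v,w,u}" and Q = "\<lambda>y. Cons w ` Wk r m w y {w,u}" and v = v])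
    show "\<And>y. y < r \<Longrightarrow> Cons v ` Wk r m v y {v,w,u} \<inter> Cons w ` Wk r m w y {w,u} = {}"
      using assms(1) by auto
    show "\<And>y. y < r \<Longrightarrow> finite (Cons w ` Wk r m w y {w,u})" using Wk_card2 assms by blast
  qed (use assms rec in auto)
  moreover have "card (Cons w ` Wk r m w y {w,u}) = tt r (m w) y" if "y < r" for y
    using Wk_card2[OF assms(2,4,5,6) that] by (simp add: card_image)
  moreover have "(x + s * m v) mod r < r" for s using assms(6) by simp
  ultimately show ?thesis by simp
qed

lemma Wk_card4:
  assumes "v < w" "w < u" "u < z" "coprime (m v) r" "coprime (m w) r" "coprime (m u) r" "coprime (m z) r"
    "r > 1" "x < r"
  shows "finite (Wk r m v x {v,w,u,z}) \<and> card (Wk r m v x {v,w,u,z}) =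
     (\<Sum>s\<in>{1..<tt r (m v) x}. card (Wk r m w ((x + s * m v) mod r) {w,u,z}))"
proof -
  have ne: "{v,w,u,z} \<noteq> {v,w}"
  proof
    assume "{v,w,u,z} = {v,w}"
    moreover have "u \<in> {v,w,u,z}" by simp
    ultimately have "u \<in> {v,w}" by simp
    then show False using assms(1,2) by simp
  qed
  have rec: "Wk r m v y {v,w,u,z} = (if (y + m v) mod r = 0 then {}
     else Cons v ` Wk r m v ((y + m v) mod r) {v,w,u,z} \<union> Cons w ` Wk r m w ((y + m v) mod r) {w,u,z})" for y
  proof -
    have "{v,w,u,z} - {v} = {w,u,z}" using assms(1,2,3) by auto
    then show ?thesis using Ex_rec[of v w "{v,w,u,z}" r m y] assms(1,2,3) ne by simp
  qed
  have "finite (Wk r m v x {v,w,u,z}) \<and> card (Wk r m v x {v,w,u,z}) = card ({}::nat list set) +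
      (\<Sum>s\<in>{1..<tt r (m v) x}. card (Cons w ` Wk r m w ((x + s * m v) mod r) {w,u,z}))"
  proof (rule walk_gen[where P = "\<lambda>x. Wk r m v x {v,w,u,z}" and Q = "\<lambda>y. Cons w ` Wk r m w y {w,u,z}" and v = v])
    show "\<And>y. y < r \<Longrightarrow> Cons v ` Wk r m v y {v,w,u,z} \<inter> Cons w ` Wk r m w y {w,u,z} = {}"
      using assms(1) by auto
    show "\<And>y. y < r \<Longrightarrow> finite (Cons w ` Wk r m w y {w,u,z})" using Wk_card3 assms by blast
  qed (use assms rec in auto)
  moreover have "card (Cons w ` Wk r m w y {w,u,z}) = card (Wk r m w y {w,u,z})" for y
    by (simp add: card_image)
  ultimately show ?thesis by simp
qed


fun mk :: "nat \<Rightarrow> (nat \<Rightarrow> nat) \<Rightarrow> nat \<Rightarrow> nat \<Rightarrow> nat list \<Rightarrow> edge list" where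
  "mk r m v x [] = []"
| "mk r m v x (j # js) = (v, j, (x + m v) mod r) # mk r m j ((x + m v) mod r) js"

lemma mk_map: "map (\<lambda>e. fst (snd e)) (mk r m v x js) = js"
  by (induction js arbitrary: v x) auto

lemma mk_nil: "(mk r m v x js = []) = (js = [])"
  by (cases js) auto

lemma mk_hd: "js \<noteq> [] \<Longrightarrow> hd (mk r m v x js) = (v, hd js, (x + m v) mod r)"
  by (cases js) auto

lemma mk_last: "js \<noteq> [] \<Longrightarrow> fst (snd (last (mk r m v x js))) = last js"
proof -
  assume "js \<noteq> []"
  then have "mk r m v x js \<noteq> []" by (simp add: mk_nil)
  then have "fst (snd (last (mk r m v x js))) = last (map (\<lambda>e. fst (snd e)) (mk r m v x js))"
    by (simp add: last_map)
  then show ?thesis by (simp add: mk_map)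
qed

lemma mk_set: "(\<lambda>e. fst (snd e)) ` set (mk r m v x js) = set js"
  by (metis mk_map set_map)

lemma succ_nth: "(\<forall>a. Suc a < length xs \<longrightarrow> P (xs ! a) (xs ! Suc a)) \<longleftrightarrow> successively P xs"
proof (induction xs)
  case Nil show ?case by simp
next
  case (Cons x xs)
  show ?case
  proof (cases xs)
    case Nil then show ?thesis by simp
  next
    case (Cons y ys)
    have "(\<forall>a. Suc a < length (x # y # ys) \<longrightarrow> P ((x # y # ys) ! a) ((x # y # ys) ! Suc a))
       \<longleftrightarrow> P x y \<and> (\<forall>a. Suc a < length (y # ys) \<longrightarrow> P ((y # ys) ! a) ((y # ys) ! Suc a))"
    proof
      assume h: "\<forall>a. Suc a < length (x # y # ys) \<longrightarrow> P ((x # y # ys) ! a) ((x # y # ys) ! Suc a)"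
      show "P x y \<and> (\<forall>a. Suc a < length (y # ys) \<longrightarrow> P ((y # ys) ! a) ((y # ys) ! Suc a))"
      proof
        show "P x y" using h[rule_format, of 0] by simp
        show "\<forall>a. Suc a < length (y # ys) \<longrightarrow> P ((y # ys) ! a) ((y # ys) ! Suc a)"
        proof (intro allI impI)
          fix a assume "Suc a < length (y # ys)"
          then show "P ((y # ys) ! a) ((y # ys) ! Suc a)" using h[rule_format, of "Suc a"] by simp
        qed
      qed
    next
      assume h: "P x y \<and> (\<forall>a. Suc a < length (y # ys) \<longrightarrow> P ((y # ys) ! a) ((y # ys) ! Suc a))"
      show "\<forall>a. Suc a < length (x # y # ys) \<longrightarrow> P ((x # y # ys) ! a) ((x # y # ys) ! Suc a)"
      proof (intro allI impI)
        fix a assume a: "Suc a < length (x # y # ys)"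
        show "P ((x # y # ys) ! a) ((x # y # ys) ! Suc a)"
        proof (cases a)
          case 0 then show ?thesis using h by simp
        next
          case (Suc b) then show ?thesis using h a by simp
        qed
      qed
    qed
    then show ?thesis using Cons.IH Cons by simp
  qed
qed

lemma nz_butlast: "(\<forall>a. Suc a < length xs \<longrightarrow> f (xs ! a) \<noteq> (0::nat)) \<longleftrightarrow> (\<forall>e\<in>set (butlast xs). f e \<noteq> 0)"
proof
  assume h: "\<forall>a. Suc a < length xs \<longrightarrow> f (xs ! a) \<noteq> 0"
  show "\<forall>e\<in>set (butlast xs). f e \<noteq> 0"
  proof
    fix e assume "e \<in> set (butlast xs)"
    then obtain a where a: "a < length (butlast xs)" "e = butlast xs ! a" by (auto simp: in_set_conv_nth)
    then have "e = xs ! a" by (simp add: nth_butlast)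
    moreover have "Suc a < length xs" using a(1) by simp
    ultimately show "f e \<noteq> 0" using h by simp
  qed
next
  assume h: "\<forall>e\<in>set (butlast xs). f e \<noteq> 0"
  show "\<forall>a. Suc a < length xs \<longrightarrow> f (xs ! a) \<noteq> 0"
  proof (intro allI impI)
    fix a assume a: "Suc a < length xs"
    then have "a < length (butlast xs)" by simp
    then have "butlast xs ! a \<in> set (butlast xs)" "butlast xs ! a = xs ! a"
      by (rule nth_mem, rule nth_butlast)
    then show "f (xs ! a) \<noteq> 0" using h by metis
  qed
qed
lemma ok_char: "ok r m v x js \<longleftrightarrow> js \<noteq> [] \<and> (\<forall>e\<in>set (butlast (mk r m v x js)). snd (snd e) \<noteq> 0)
   \<and> snd (snd (last (mk r m v x js))) = 0"
proof (induction r m v x js rule: ok.induct)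
  case (3 r m v x j j2 js)
  have ne: "mk r m j ((x + m v) mod r) (j2 # js) \<noteq> []" by simp
  show ?case using "3.IH" ne by simp
qed auto

lemma mk_edges:
  assumes "r > 0"
  shows "set (mk r m v x js) \<subseteq> L_edges n r \<longleftrightarrow> js = [] \<or> (1 \<le> v \<and> sorted (v # js) \<and> (\<forall>y\<in>set js. y \<le> n))"
proof (induction js arbitrary: v x)
  case Nil then show ?case by simp
next
  case (Cons j js)
  define k where "k = (x + m v) mod r"
  have k: "k < r" using assms by (simp add: k_def)
  have mk: "mk r m v x (j # js) = (v, j, k) # mk r m j k js" by (simp add: k_def)
  have ed: "((v, j, k) \<in> L_edges n r) = (1 \<le> v \<and> v \<le> j \<and> j \<le> n)" using k by (simp add: L_edges_def)
  have IH: "set (mk r m j k js) \<subseteq> L_edges n r \<longleftrightarrow> js = [] \<or> (1 \<le> j \<and> sorted (j # js) \<and> (\<forall>y\<in>set js. y \<le> n))"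
    by (rule Cons.IH)
  show ?case
  proof (cases js)
    case Nil then show ?thesis unfolding mk using ed by simp
  next
    case (Cons j2 js2)
    have "set (mk r m v x (j # js)) \<subseteq> L_edges n r \<longleftrightarrow> (1 \<le> v \<and> v \<le> j \<and> j \<le> n) \<and> (1 \<le> j \<and> sorted (j # js) \<and> (\<forall>y\<in>set js. y \<le> n))"
      unfolding mk using ed IH Cons by simp
    also have "\<dots> \<longleftrightarrow> 1 \<le> v \<and> sorted (v # j # js) \<and> (\<forall>y\<in>set (j # js). y \<le> n)"
      by auto
    finally show ?thesis by simp
  qed
qed

lemma src_lemma:
  assumes "k < r"
  shows "nat ((int ((k + a) mod r) - int a) mod int r) = k"
proof -
  have "int ((k + a) mod r) = (int k + int a) mod int r" by (simp add: zmod_int)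
  then have "(int ((k + a) mod r) - int a) mod int r = (int k + int a - int a) mod int r"
    by (simp add: mod_diff_left_eq)
  also have "\<dots> = int k" using assms by simp
  finally show ?thesis by simp
qed

lemma src_inv:
  assumes "k2 < r" "k = nat ((int k2 - int a) mod int r)"
  shows "k2 = (k + a) mod r"
proof -
  have r0: "r > 0" using assms by simp
  have "int k = (int k2 - int a) mod int r" using assms r0 by simp
  then have "int ((k + a) mod r) = ((int k2 - int a) mod int r + int a) mod int r"
    by (simp add: zmod_int)
  also have "\<dots> = int k2 mod int r" by (simp add: mod_add_left_eq)
  also have "\<dots> = int k2" using assms by simp
  finally show ?thesis by simp
qed

lemma mk_chain:
  assumes "r > 0"
  shows "successively (\<lambda>e1 e2. L_rng e1 = L_src r m e2) (mk r m v x js)"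
proof (induction js arbitrary: v x)
  case Nil then show ?case by simp
next
  case (Cons j js)
  show ?case
  proof (cases js)
    case Nil then show ?thesis by simp
  next
    case (Cons j2 js2)
    have "L_rng (v, j, (x + m v) mod r) = L_src r m (j, j2, ((x + m v) mod r + m j) mod r)"
      using src_lemma[of "(x + m v) mod r" r "m j"] assms by (simp add: L_rng_def L_src_def)
    then show ?thesis using Cons.IH[of j "(x + m v) mod r"] Cons by simp
  qed
qed

lemma path_mk:
  assumes "r > 0"
  shows "\<alpha> \<noteq> [] \<Longrightarrow> set \<alpha> \<subseteq> L_edges n r \<Longrightarrow> successively (\<lambda>e1 e2. L_rng e1 = L_src r m e2) \<alpha>
    \<Longrightarrow> fst (hd \<alpha>) = v \<Longrightarrow> snd (snd (hd \<alpha>)) = (x + m v) mod r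
    \<Longrightarrow> \<alpha> = mk r m v x (map (\<lambda>e. fst (snd e)) \<alpha>)"
proof (induction \<alpha> arbitrary: v x)
  case Nil then show ?case by simp
next
  case (Cons e \<beta>)
  obtain i j k where e: "e = (i, j, k)" by (cases e) auto
  have ik: "i = v" "k = (x + m v) mod r" using Cons.prems e by auto
  show ?case
  proof (cases \<beta>)
    case Nil then show ?thesis using e ik by simp
  next
    case (Cons e2 \<gamma>)
    obtain i2 j2 k2 where e2: "e2 = (i2, j2, k2)" by (cases e2) auto
    have rel: "L_rng e = L_src r m e2" using Cons.prems(3) Cons by simp
    then have i2: "i2 = j" and kk: "k = nat ((int k2 - int (m i2)) mod int r)"
      using e e2 by (auto simp: L_rng_def L_src_def)
    have "k2 < r" using Cons.prems(2) Cons e2 by (auto simp: L_edges_def)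
    then have k2: "k2 = (k + m j) mod r" using src_inv[of k2 r k "m j"] kk i2 by simp
    have "\<beta> = mk r m j k (map (\<lambda>e. fst (snd e)) \<beta>)"
    proof (rule Cons.IH)
      show "\<beta> \<noteq> []" using Cons by simp
      show "set \<beta> \<subseteq> L_edges n r" using Cons.prems(2) by simp
      show "successively (\<lambda>e1 e2. L_rng e1 = L_src r m e2) \<beta>"
        using Cons.prems(3) unfolding successively_Cons by auto
      show "fst (hd \<beta>) = j" using Cons e2 i2 by simp
      show "snd (snd (hd \<beta>)) = (k + m j) mod r" using Cons e2 k2 by simp
    qed
    then show ?thesis using e ik by simp
  qed
qed


definition JS :: "nat \<Rightarrow> (nat \<Rightarrow> nat) \<Rightarrow> nat \<Rightarrow> nat \<Rightarrow> nat \<Rightarrow> nat list set" where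
  "JS r m n i j = {js. ok r m i 0 js \<and> sorted (i # js) \<and> (\<forall>y\<in>set js. y \<le> n) \<and> last js = j}"

lemma zs_char:
  assumes "r > 1" "1 \<le> i"
  shows "zs_paths n r m i j = mk r m i 0 ` JS r m n i j"
proof (rule set_eqI)
  fix \<alpha>
  show "\<alpha> \<in> zs_paths n r m i j \<longleftrightarrow> \<alpha> \<in> mk r m i 0 ` JS r m n i j"
  proof
    assume "\<alpha> \<in> zs_paths n r m i j"
    then have h: "\<alpha> \<noteq> []" "set \<alpha> \<subseteq> L_edges n r"
      "\<forall>a. Suc a < length \<alpha> \<longrightarrow> L_rng (\<alpha> ! a) = L_src r m (\<alpha> ! Suc a)"
      "snd (snd (hd \<alpha>)) = m (fst (hd \<alpha>)) mod r"
      "\<forall>a. Suc a < length \<alpha> \<longrightarrow> snd (snd (\<alpha> ! a)) \<noteq> 0"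
      "snd (snd (last \<alpha>)) = 0" "fst (hd \<alpha>) = i" "fst (snd (last \<alpha>)) = j"
      unfolding zs_paths_def zero_simple_def L_path_def by auto
    define js where "js = map (\<lambda>e. fst (snd e)) \<alpha>"
    have succ: "successively (\<lambda>e1 e2. L_rng e1 = L_src r m e2) \<alpha>"
      using h(3) succ_nth[of \<alpha> "\<lambda>e1 e2. L_rng e1 = L_src r m e2"] by simp
    have a: "\<alpha> = mk r m i 0 js"
      unfolding js_def using assms h(1,2,4,7) succ by (intro path_mk) auto
    have jsne: "js \<noteq> []" using h(1) by (simp add: js_def)
    have nzb: "\<forall>e\<in>set (butlast \<alpha>). snd (snd e) \<noteq> 0"
      using h(5) nz_butlast[of \<alpha> "\<lambda>e. snd (snd e)"] by (simp only:)
    have okj: "ok r m i 0 js" unfolding ok_char a[symmetric] using h(6) jsne nzb by (intro conjI)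
    have ed: "set (mk r m i 0 js) \<subseteq> L_edges n r" using h(2) a by (simp only:)
    have so: "1 \<le> i \<and> sorted (i # js) \<and> (\<forall>y\<in>set js. y \<le> n)"
      using mk_edges[of r m i 0 js n] ed jsne assms by simp
    have lj: "last js = j" using mk_last[OF jsne, of r m i 0] h(8) unfolding a[symmetric] by (simp only:)
    have "js \<in> JS r m n i j" unfolding JS_def using okj so lj by simp
    then show "\<alpha> \<in> mk r m i 0 ` JS r m n i j" using a by (rule rev_image_eqI)
  next
    assume "\<alpha> \<in> mk r m i 0 ` JS r m n i j"
    then obtain js where js: "\<alpha> = mk r m i 0 js" "ok r m i 0 js" "sorted (i # js)" "\<forall>y\<in>set js. y \<le> n" "last js = j"
      unfolding JS_def by blast
    have jsne: "js \<noteq> []" using js(2) by auto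
    have ane: "\<alpha> \<noteq> []" using js(1) jsne by (simp add: mk_nil)
    have e: "set \<alpha> \<subseteq> L_edges n r" using mk_edges[of r m i 0 js n] js assms by simp
    have sc: "successively (\<lambda>e1 e2. L_rng e1 = L_src r m e2) \<alpha>"
      unfolding js(1) using assms by (intro mk_chain) simp
    have c: "\<forall>a. Suc a < length \<alpha> \<longrightarrow> L_rng (\<alpha> ! a) = L_src r m (\<alpha> ! Suc a)"
      by (subst succ_nth) (rule sc)
    have ok: "(\<forall>e\<in>set (butlast \<alpha>). snd (snd e) \<noteq> 0) \<and> snd (snd (last \<alpha>)) = 0"
      using js(2) unfolding ok_char js(1)[symmetric] by (elim conjE) (intro conjI)
    have hd: "hd \<alpha> = (i, hd js, m i mod r)" using mk_hd[OF jsne, of r m i 0] js(1) by simp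
    have lst: "fst (snd (last \<alpha>)) = j" using mk_last[OF jsne, of r m i 0] js by simp
    show "\<alpha> \<in> zs_paths n r m i j"
      unfolding zs_paths_def zero_simple_def L_path_def
      using ane e c ok nz_butlast[of \<alpha> "\<lambda>e. snd (snd e)"] hd lst by simp
  qed
qed


lemma set12: "{1..2::nat} = {1,2}" by auto
lemma set13: "{1..3::nat} = {1,2,3}" by auto
lemma set14: "{1..4::nat} = {1,2,3,4}" by auto

lemma ks1:
  "(\<exists>t::nat\<Rightarrow>int. strict_mono_on {1..2} t \<and> t 1 = int I \<and> t 2 = int J \<and>
      (\<forall>e\<in>A. int (g e) \<in> t ` {1..2}))
   \<longleftrightarrow> I < J \<and> (\<forall>e\<in>A. g e \<in> {I, J})"
proof
  assume "\<exists>t::nat\<Rightarrow>int. strict_mono_on {1..2} t \<and> t 1 = int I \<and> t 2 = int J \<and>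
      (\<forall>e\<in>A. int (g e) \<in> t ` {1..2})"
  then obtain t :: "nat \<Rightarrow> int" where t: "strict_mono_on {1..2} t" "t 1 = int I" "t 2 = int J"
    "\<forall>e\<in>A. int (g e) \<in> t ` {1..2}" by blast
  have "t 1 < t 2" using t(1) by (rule strict_mono_onD) auto
  then have "I < J" using t by simp
  moreover have "\<forall>e\<in>A. g e \<in> {I, J}" using t(2,3,4) unfolding set12 by auto
  ultimately show "I < J \<and> (\<forall>e\<in>A. g e \<in> {I, J})" by simp
next
  assume h: "I < J \<and> (\<forall>e\<in>A. g e \<in> {I, J})"
  define t :: "nat \<Rightarrow> int" where "t = (\<lambda>q. if q = 1 then int I else int J)"
  have "strict_mono_on {1..2} t" unfolding strict_mono_on_def t_def using h by auto
  moreover have "t ` {1..2} = {int I, int J}" unfolding set12 t_def by auto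
  ultimately show "\<exists>t::nat\<Rightarrow>int. strict_mono_on {1..2} t \<and> t 1 = int I \<and> t 2 = int J \<and>
      (\<forall>e\<in>A. int (g e) \<in> t ` {1..2})" using h by (intro exI[where x = t]) (auto simp: t_def)
qed

lemma ks2:
  "(\<exists>t::nat\<Rightarrow>int. strict_mono_on {1..3} t \<and> t 1 = int I \<and> t 3 = int J \<and>
      (\<exists>e\<in>A. int (g e) = t 2) \<and> (\<forall>e\<in>A. int (g e) \<in> t ` {1..3}))
   \<longleftrightarrow> (\<exists>b. I < b \<and> b < J \<and> (\<exists>e\<in>A. g e = b) \<and> (\<forall>e\<in>A. g e \<in> {I, b, J}))"
proof
  assume "\<exists>t::nat\<Rightarrow>int. strict_mono_on {1..3} t \<and> t 1 = int I \<and> t 3 = int J \<and>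
      (\<exists>e\<in>A. int (g e) = t 2) \<and> (\<forall>e\<in>A. int (g e) \<in> t ` {1..3})"
  then obtain t :: "nat \<Rightarrow> int" where t: "strict_mono_on {1..3} t" "t 1 = int I" "t 3 = int J"
    "\<exists>e\<in>A. int (g e) = t 2" "\<forall>e\<in>A. int (g e) \<in> t ` {1..3}" by blast
  obtain e0 where e0: "e0 \<in> A" "int (g e0) = t 2" using t(4) by blast
  have "t 1 < t 2" using t(1) by (rule strict_mono_onD) auto
  moreover have "t 2 < t 3" using t(1) by (rule strict_mono_onD) auto
  ultimately have "I < g e0" "g e0 < J" using t e0 by auto
  moreover have "\<forall>e\<in>A. g e \<in> {I, g e0, J}" using t(2,3,5) e0 unfolding set13 by auto
  ultimately show "\<exists>b. I < b \<and> b < J \<and> (\<exists>e\<in>A. g e = b) \<and> (\<forall>e\<in>A. g e \<in> {I, b, J})"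
    using e0 by blast
next
  assume "\<exists>b. I < b \<and> b < J \<and> (\<exists>e\<in>A. g e = b) \<and> (\<forall>e\<in>A. g e \<in> {I, b, J})"
  then obtain b where h: "I < b" "b < J" "\<exists>e\<in>A. g e = b" "\<forall>e\<in>A. g e \<in> {I, b, J}" by blast
  define t :: "nat \<Rightarrow> int" where "t = (\<lambda>q. if q = 1 then int I else if q = 2 then int b else int J)"
  have "strict_mono_on {1..3} t" unfolding strict_mono_on_def t_def using h by auto
  moreover have "t ` {1..3} = {int I, int b, int J}" unfolding set13 t_def by auto
  ultimately show "\<exists>t::nat\<Rightarrow>int. strict_mono_on {1..3} t \<and> t 1 = int I \<and> t 3 = int J \<and>
      (\<exists>e\<in>A. int (g e) = t 2) \<and> (\<forall>e\<in>A. int (g e) \<in> t ` {1..3})"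
    using h by (intro exI[where x = t]) (auto simp: t_def)
qed

lemma ks3:
  "(\<exists>t::nat\<Rightarrow>int. strict_mono_on {1..4} t \<and> t 1 = int I \<and> t 4 = int J \<and>
      (\<exists>e\<in>A. int (g e) = t 2) \<and> (\<exists>e\<in>A. int (g e) = t 3) \<and> (\<forall>e\<in>A. int (g e) \<in> t ` {1..4}))
   \<longleftrightarrow> (\<exists>b c. I < b \<and> b < c \<and> c < J \<and> (\<exists>e\<in>A. g e = b) \<and> (\<exists>e\<in>A. g e = c) \<and> (\<forall>e\<in>A. g e \<in> {I, b, c, J}))"
proof
  assume "\<exists>t::nat\<Rightarrow>int. strict_mono_on {1..4} t \<and> t 1 = int I \<and> t 4 = int J \<and>
      (\<exists>e\<in>A. int (g e) = t 2) \<and> (\<exists>e\<in>A. int (g e) = t 3) \<and> (\<forall>e\<in>A. int (g e) \<in> t ` {1..4})"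
  then obtain t :: "nat \<Rightarrow> int" where t: "strict_mono_on {1..4} t" "t 1 = int I" "t 4 = int J"
    "\<exists>e\<in>A. int (g e) = t 2" "\<exists>e\<in>A. int (g e) = t 3" "\<forall>e\<in>A. int (g e) \<in> t ` {1..4}" by blast
  obtain e0 where e0: "e0 \<in> A" "int (g e0) = t 2" using t(4) by blast
  obtain e1 where e1: "e1 \<in> A" "int (g e1) = t 3" using t(5) by blast
  have "t 1 < t 2" using t(1) by (rule strict_mono_onD) auto
  moreover have "t 2 < t 3" using t(1) by (rule strict_mono_onD) auto
  moreover have "t 3 < t 4" using t(1) by (rule strict_mono_onD) auto
  ultimately have "I < g e0" "g e0 < g e1" "g e1 < J" using t e0 e1 by auto
  moreover have "\<forall>e\<in>A. g e \<in> {I, g e0, g e1, J}" using t(2,3,6) e0 e1 unfolding set14 by auto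
  ultimately show "\<exists>b c. I < b \<and> b < c \<and> c < J \<and> (\<exists>e\<in>A. g e = b) \<and> (\<exists>e\<in>A. g e = c) \<and> (\<forall>e\<in>A. g e \<in> {I, b, c, J})"
    using e0 e1 by blast
next
  assume "\<exists>b c. I < b \<and> b < c \<and> c < J \<and> (\<exists>e\<in>A. g e = b) \<and> (\<exists>e\<in>A. g e = c) \<and> (\<forall>e\<in>A. g e \<in> {I, b, c, J})"
  then obtain b c where h: "I < b" "b < c" "c < J" "\<exists>e\<in>A. g e = b" "\<exists>e\<in>A. g e = c" "\<forall>e\<in>A. g e \<in> {I, b, c, J}" by blast
  define t :: "nat \<Rightarrow> int" where "t = (\<lambda>q. if q = 1 then int I else if q = 2 then int b else if q = 3 then int c else int J)"
  have "strict_mono_on {1..4} t" unfolding strict_mono_on_def t_def using h by auto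
  moreover have "t ` {1..4} = {int I, int b, int c, int J}" unfolding set14 t_def by auto
  ultimately show "\<exists>t::nat\<Rightarrow>int. strict_mono_on {1..4} t \<and> t 1 = int I \<and> t 4 = int J \<and>
      (\<exists>e\<in>A. int (g e) = t 2) \<and> (\<exists>e\<in>A. int (g e) = t 3) \<and> (\<forall>e\<in>A. int (g e) \<in> t ` {1..4})"
    using h by (intro exI[where x = t]) (auto simp: t_def)
qed

lemma kstep1: "k_step 1 \<alpha> \<longleftrightarrow> fst (hd \<alpha>) < fst (snd (last \<alpha>)) \<and> (\<forall>e\<in>set \<alpha>. fst (snd e) \<in> {fst (hd \<alpha>), fst (snd (last \<alpha>))})"
proof -
  have "k_step 1 \<alpha> \<longleftrightarrow> (\<exists>t::nat\<Rightarrow>int. strict_mono_on {1..2} t \<and> t 1 = int (fst (hd \<alpha>)) \<and> t 2 = int (fst (snd (last \<alpha>))) \<and>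
      (\<forall>e\<in>set \<alpha>. int (fst (snd e)) \<in> t ` {1..2}))"
  proof -
    have f: "(1::nat) + 1 = 2" by simp
    have e: "{2..1::nat} = {}" by simp
    show ?thesis unfolding k_step_def f e by simp
  qed
  then show ?thesis using ks1 by simp
qed

lemma kstep2: "k_step 2 \<alpha> \<longleftrightarrow> (\<exists>b. fst (hd \<alpha>) < b \<and> b < fst (snd (last \<alpha>)) \<and> (\<exists>e\<in>set \<alpha>. fst (snd e) = b)
   \<and> (\<forall>e\<in>set \<alpha>. fst (snd e) \<in> {fst (hd \<alpha>), b, fst (snd (last \<alpha>))}))"
proof -
  have "k_step 2 \<alpha> \<longleftrightarrow> (\<exists>t::nat\<Rightarrow>int. strict_mono_on {1..3} t \<and> t 1 = int (fst (hd \<alpha>)) \<and> t 3 = int (fst (snd (last \<alpha>))) \<and>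
      (\<exists>e\<in>set \<alpha>. int (fst (snd e)) = t 2) \<and> (\<forall>e\<in>set \<alpha>. int (fst (snd e)) \<in> t ` {1..3}))"
  proof -
    have e: "{2..2::nat} = {2}" by simp
    have f: "(2::nat) + 1 = 3" by simp
    show ?thesis unfolding k_step_def e f by simp
  qed
  then show ?thesis using ks2 by simp
qed

lemma kstep3: "k_step 3 \<alpha> \<longleftrightarrow> (\<exists>b c. fst (hd \<alpha>) < b \<and> b < c \<and> c < fst (snd (last \<alpha>)) \<and> (\<exists>e\<in>set \<alpha>. fst (snd e) = b)
   \<and> (\<exists>e\<in>set \<alpha>. fst (snd e) = c) \<and> (\<forall>e\<in>set \<alpha>. fst (snd e) \<in> {fst (hd \<alpha>), b, c, fst (snd (last \<alpha>))}))"
proof -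
  have "k_step 3 \<alpha> \<longleftrightarrow> (\<exists>t::nat\<Rightarrow>int. strict_mono_on {1..4} t \<and> t 1 = int (fst (hd \<alpha>)) \<and> t 4 = int (fst (snd (last \<alpha>))) \<and>
      (\<exists>e\<in>set \<alpha>. int (fst (snd e)) = t 2) \<and> (\<exists>e\<in>set \<alpha>. int (fst (snd e)) = t 3) \<and> (\<forall>e\<in>set \<alpha>. int (fst (snd e)) \<in> t ` {1..4}))"
  proof -
    have e: "{2..3::nat} = {2,3}" by auto
    have f: "(3::nat) + 1 = 4" by simp
    show ?thesis unfolding k_step_def e f by simp
  qed
  then show ?thesis using ks3 by simp
qed


lemma last_max: "sorted xs \<Longrightarrow> y \<in> set xs \<Longrightarrow> y \<le> last xs"
proof (induction xs)
  case Nil then show ?case by simp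
next
  case (Cons x xs)
  show ?case
  proof (cases "xs = []")
    case True then show ?thesis using Cons.prems by simp
  next
    case False
    have "last xs \<in> set xs" using False by simp
    then show ?thesis using Cons False by auto
  qed
qed

lemma ok_ne: "ok r m v x js \<Longrightarrow> js \<noteq> []" by (cases js) auto

lemma Wk_memI: "js \<in> Wk r m i x U \<longleftrightarrow> ok r m i x js \<and> sorted (i # js) \<and> insert i (set js) = U"
  by (simp add: Wk_def)

lemma JS_props:
  assumes "js \<in> JS r m n i j"
  shows "js \<noteq> [] \<and> (\<forall>y\<in>set js. i \<le> y \<and> y \<le> j) \<and> j \<in> set js \<and> last js = j \<and> js \<in> Wk r m i 0 (insert i (set js))"
proof -
  have h: "ok r m i 0 js" "sorted (i # js)" "\<forall>y\<in>set js. y \<le> n" "last js = j"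
    using assms by (auto simp: JS_def)
  have ne: "js \<noteq> []" using ok_ne h(1) by blast
  have "\<forall>y\<in>set js. i \<le> y" using h(2) by simp
  moreover have "\<forall>y\<in>set js. y \<le> j" using last_max[of js] h(2,4) by simp
  moreover have "j \<in> set js" using ne h(4) by auto
  moreover have "js \<in> Wk r m i 0 (insert i (set js))" using h(1,2) by (simp add: Wk_memI)
  ultimately show ?thesis using ne h(4) by blast
qed

lemma Wk_JS:
  assumes "js \<in> Wk r m i 0 U" "j \<in> U" "j \<noteq> i" "\<forall>u\<in>U. u \<le> j" "j \<le> n"
  shows "js \<in> JS r m n i j"
proof -
  have h: "ok r m i 0 js" "sorted (i # js)" "insert i (set js) = U" using assms(1) by (auto simp: Wk_memI)
  have ne: "js \<noteq> []" using ok_ne h(1) by blast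
  have "last js \<in> U" using ne h(3) by auto
  then have a: "last js \<le> j" using assms(4) by simp
  have "j \<in> set js" using assms(2,3) h(3) by auto
  then have "j \<le> last js" using last_max[of js] h(2) by simp
  then have "last js = j" using a by simp
  moreover have "\<forall>y\<in>set js. y \<le> n"
  proof
    fix y assume "y \<in> set js"
    then have "y \<in> U" using h(3) by auto
    then have "y \<le> j" using assms(4) by simp
    then show "y \<le> n" using assms(5) by linarith
  qed
  ultimately show ?thesis using h unfolding JS_def by simp
qed

lemma mk_facts:
  assumes "js \<noteq> []"
  shows "fst (hd (mk r m i x js)) = i" "fst (snd (last (mk r m i x js))) = last js"
    "(\<forall>e\<in>set (mk r m i x js). P (fst (snd e))) = (\<forall>y\<in>set js. P y)"
    "(\<exists>e\<in>set (mk r m i x js). Q (fst (snd e))) = (\<exists>y\<in>set js. Q y)"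
proof -
  show "fst (hd (mk r m i x js)) = i" using mk_hd[OF assms] by simp
  show "fst (snd (last (mk r m i x js))) = last js" by (rule mk_last[OF assms])
  have s: "set js = (\<lambda>e. fst (snd e)) ` set (mk r m i x js)" by (simp only: mk_set)
  show "(\<forall>e\<in>set (mk r m i x js). P (fst (snd e))) = (\<forall>y\<in>set js. P y)" unfolding s by simp
  show "(\<exists>e\<in>set (mk r m i x js). Q (fst (snd e))) = (\<exists>y\<in>set js. Q y)" unfolding s by simp
qed

lemma mk_ball: "(\<forall>e\<in>set (mk r m i x js). fst (snd e) \<in> X) = (set js \<subseteq> X)"
proof -
  have s: "set js = (\<lambda>e. fst (snd e)) ` set (mk r m i x js)" by (simp only: mk_set)
  show ?thesis unfolding s by auto
qed

lemma mk_bex: "(\<exists>e\<in>set (mk r m i x js). fst (snd e) = b) = (b \<in> set js)"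
proof -
  have s: "set js = (\<lambda>e. fst (snd e)) ` set (mk r m i x js)" by (simp only: mk_set)
  show ?thesis unfolding s by auto
qed

lemma kzs_eq:
  assumes "r > 1" "1 \<le> i"
  shows "kzs_paths n r m s i j = mk r m i 0 ` {js \<in> JS r m n i j. k_step s (mk r m i 0 js)}"
  unfolding kzs_paths_def zs_char[OF assms] by blast

lemma K1:
  assumes "i < j" "j \<le> n"
  shows "{js \<in> JS r m n i j. k_step 1 (mk r m i 0 js)} = Wk r m i 0 {i,j}"
proof (rule set_eqI)
  fix js
  show "js \<in> {js \<in> JS r m n i j. k_step 1 (mk r m i 0 js)} \<longleftrightarrow> js \<in> Wk r m i 0 {i,j}"
  proof
    assume "js \<in> {js \<in> JS r m n i j. k_step 1 (mk r m i 0 js)}"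
    then have a: "js \<in> JS r m n i j" "k_step 1 (mk r m i 0 js)" by auto
    note p = JS_props[OF a(1)]
    have ne: "js \<noteq> []" using p by blast
    have "set js \<subseteq> {i, j}" using a(2) p unfolding kstep1 mk_ball mk_bex mk_facts(1,2)[OF ne] by simp
    then have "insert i (set js) = {i, j}" using p by auto
    then show "js \<in> Wk r m i 0 {i,j}" using p by simp
  next
    assume a: "js \<in> Wk r m i 0 {i,j}"
    have js: "js \<in> JS r m n i j" by (rule Wk_JS[OF a]) (use assms in auto)
    note p = JS_props[OF js]
    have ne: "js \<noteq> []" using p by blast
    have "insert i (set js) = {i,j}" using a by (simp add: Wk_memI)
    then have "k_step 1 (mk r m i 0 js)" unfolding kstep1 mk_ball mk_bex mk_facts(1,2)[OF ne] using p assms by auto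
    then show "js \<in> {js \<in> JS r m n i j. k_step 1 (mk r m i 0 js)}" using js by simp
  qed
qed

lemma K2:
  assumes "i < j" "j \<le> n"
  shows "{js \<in> JS r m n i j. k_step 2 (mk r m i 0 js)} = (\<Union>b\<in>{i<..<j}. Wk r m i 0 {i,b,j})"
proof (rule set_eqI)
  fix js
  show "js \<in> {js \<in> JS r m n i j. k_step 2 (mk r m i 0 js)} \<longleftrightarrow> js \<in> (\<Union>b\<in>{i<..<j}. Wk r m i 0 {i,b,j})"
  proof
    assume "js \<in> {js \<in> JS r m n i j. k_step 2 (mk r m i 0 js)}"
    then have a: "js \<in> JS r m n i j" "k_step 2 (mk r m i 0 js)" by auto
    note p = JS_props[OF a(1)]
    have ne: "js \<noteq> []" using p by blast
    obtain b where b: "i < b" "b < j" "b \<in> set js" "set js \<subseteq> {i, b, j}"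
      using a(2) p unfolding kstep2 mk_ball mk_bex mk_facts(1,2)[OF ne] by auto
    then have "insert i (set js) = {i, b, j}" using p by auto
    then show "js \<in> (\<Union>b\<in>{i<..<j}. Wk r m i 0 {i,b,j})" using p b by auto
  next
    assume "js \<in> (\<Union>b\<in>{i<..<j}. Wk r m i 0 {i,b,j})"
    then obtain b where b: "i < b" "b < j" and a: "js \<in> Wk r m i 0 {i,b,j}" by auto
    have js: "js \<in> JS r m n i j" by (rule Wk_JS[OF a]) (use assms b in auto)
    note p = JS_props[OF js]
    have ne: "js \<noteq> []" using p by blast
    have s: "insert i (set js) = {i,b,j}" using a by (simp add: Wk_memI)
    then have "b \<in> set js" using b by auto
    then have "k_step 2 (mk r m i 0 js)" unfolding kstep2 mk_ball mk_bex mk_facts(1,2)[OF ne] using p assms b s by auto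
    then show "js \<in> {js \<in> JS r m n i j. k_step 2 (mk r m i 0 js)}" using js by simp
  qed
qed

lemma K3:
  assumes "i + 3 \<le> n"
  shows "{js \<in> JS r m n i (i+3). k_step 3 (mk r m i 0 js)} = Wk r m i 0 {i,i+1,i+2,i+3}"
proof (rule set_eqI)
  fix js
  show "js \<in> {js \<in> JS r m n i (i+3). k_step 3 (mk r m i 0 js)} \<longleftrightarrow> js \<in> Wk r m i 0 {i,i+1,i+2,i+3}"
  proof
    assume "js \<in> {js \<in> JS r m n i (i+3). k_step 3 (mk r m i 0 js)}"
    then have a: "js \<in> JS r m n i (i+3)" "k_step 3 (mk r m i 0 js)" by auto
    note p = JS_props[OF a(1)]
    have ne: "js \<noteq> []" using p by blast
    obtain b c where b: "i < b" "b < c" "c < i+3" "b \<in> set js" "c \<in> set js" "set js \<subseteq> {i, b, c, i+3}"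
      using a(2) p unfolding kstep3 mk_ball mk_bex mk_facts(1,2)[OF ne] by auto
    then have bc: "b = i+1" "c = i+2" by auto
    have "insert i (set js) = {i,i+1,i+2,i+3}" using p b unfolding bc by auto
    then show "js \<in> Wk r m i 0 {i,i+1,i+2,i+3}" using p by simp
  next
    assume a: "js \<in> Wk r m i 0 {i,i+1,i+2,i+3}"
    have js: "js \<in> JS r m n i (i+3)" by (rule Wk_JS[OF a]) (use assms in auto)
    note p = JS_props[OF js]
    have ne: "js \<noteq> []" using p by blast
    have s: "insert i (set js) = {i,i+1,i+2,i+3}" using a by (simp add: Wk_memI)
    have "i+1 \<in> insert i (set js)" "i+2 \<in> insert i (set js)" unfolding s by simp_all
    then have "i+1 \<in> set js" "i+2 \<in> set js" by simp_all
    then have "k_step 3 (mk r m i 0 js)" unfolding kstep3 mk_ball mk_bex mk_facts(1,2)[OF ne] using p s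
      by (intro exI[where x = "i+1"] exI[where x = "i+2"]) auto
    then show "js \<in> {js \<in> JS r m n i (i+3). k_step 3 (mk r m i 0 js)}" using js by simp
  qed
qed

lemma Z2:
  assumes "i + 2 \<le> n"
  shows "JS r m n i (i+2) = Wk r m i 0 {i,i+2} \<union> Wk r m i 0 {i,i+1,i+2}"
proof (rule set_eqI)
  fix js
  show "js \<in> JS r m n i (i+2) \<longleftrightarrow> js \<in> Wk r m i 0 {i,i+2} \<union> Wk r m i 0 {i,i+1,i+2}"
  proof
    assume a: "js \<in> JS r m n i (i+2)"
    note p = JS_props[OF a]
    have "insert i (set js) = (if i+1 \<in> set js then {i,i+1,i+2} else {i,i+2})"
    proof (rule set_eqI)
      fix y
      have "y \<in> set js \<Longrightarrow> y = i \<or> y = i+1 \<or> y = i+2" using p by fastforce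
      then show "y \<in> insert i (set js) \<longleftrightarrow> y \<in> (if i+1 \<in> set js then {i,i+1,i+2} else {i,i+2})"
        using p by auto
    qed
    then show "js \<in> Wk r m i 0 {i,i+2} \<union> Wk r m i 0 {i,i+1,i+2}"
      using p by (auto split: if_splits)
  next
    assume "js \<in> Wk r m i 0 {i,i+2} \<union> Wk r m i 0 {i,i+1,i+2}"
    then show "js \<in> JS r m n i (i+2)"
    proof
      assume a: "js \<in> Wk r m i 0 {i,i+2}"
      show ?thesis by (rule Wk_JS[OF a]) (use assms in auto)
    next
      assume a: "js \<in> Wk r m i 0 {i,i+1,i+2}"
      show ?thesis by (rule Wk_JS[OF a]) (use assms in auto)
    qed
  qed
qed

lemma Z3:
  assumes "i + 3 \<le> n"
  shows "JS r m n i (i+3) = Wk r m i 0 {i,i+3} \<union> Wk r m i 0 {i,i+1,i+3} \<union> Wk r m i 0 {i,i+2,i+3} \<union> Wk r m i 0 {i,i+1,i+2,i+3}"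
proof (rule set_eqI)
  fix js
  show "js \<in> JS r m n i (i+3) \<longleftrightarrow> js \<in> Wk r m i 0 {i,i+3} \<union> Wk r m i 0 {i,i+1,i+3} \<union> Wk r m i 0 {i,i+2,i+3} \<union> Wk r m i 0 {i,i+1,i+2,i+3}"
  proof
    assume a: "js \<in> JS r m n i (i+3)"
    note p = JS_props[OF a]
    have "insert i (set js) = (if i+1 \<in> set js then (if i+2 \<in> set js then {i,i+1,i+2,i+3} else {i,i+1,i+3})
        else (if i+2 \<in> set js then {i,i+2,i+3} else {i,i+3}))"
    proof (rule set_eqI)
      fix y
      have "y \<in> set js \<Longrightarrow> y = i \<or> y = i+1 \<or> y = i+2 \<or> y = i+3" using p by fastforce
      then show "y \<in> insert i (set js) \<longleftrightarrow> y \<in> (if i+1 \<in> set js then (if i+2 \<in> set js then {i,i+1,i+2,i+3} else {i,i+1,i+3})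
        else (if i+2 \<in> set js then {i,i+2,i+3} else {i,i+3}))"
        using p by auto
    qed
    then show "js \<in> Wk r m i 0 {i,i+3} \<union> Wk r m i 0 {i,i+1,i+3} \<union> Wk r m i 0 {i,i+2,i+3} \<union> Wk r m i 0 {i,i+1,i+2,i+3}"
      using p by (auto split: if_splits)
  next
    assume "js \<in> Wk r m i 0 {i,i+3} \<union> Wk r m i 0 {i,i+1,i+3} \<union> Wk r m i 0 {i,i+2,i+3} \<union> Wk r m i 0 {i,i+1,i+2,i+3}"
    then show "js \<in> JS r m n i (i+3)"
      using Wk_JS[of js r m i _ "i+3" n] assms by auto
  qed
qed


lemma bij_sum:
  fixes h :: "nat \<Rightarrow> nat" and f :: "nat \<Rightarrow> 'a::comm_monoid_add"
  assumes "inj_on h {1..<r}" "h ` {1..<r} \<subseteq> {1..<r}"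
  shows "(\<Sum>s\<in>{1..<r}. f (h s)) = (\<Sum>s\<in>{1..<r}. f s)"
proof -
  have "card (h ` {1..<r}) = card {1..<r}" using assms(1) by (rule card_image)
  then have e: "h ` {1..<r} = {1..<r}" using assms(2) by (intro card_subset_eq) auto
  have "(\<Sum>s\<in>{1..<r}. f s) = (\<Sum>s\<in>h ` {1..<r}. f s)" by (simp only: e)
  also have "\<dots> = (\<Sum>s\<in>{1..<r}. f (h s))" using assms(1) by (simp add: sum.reindex)
  finally show ?thesis by simp
qed

lemma h1_bij:
  fixes a r :: nat
  assumes "coprime a r" "r > 1"
  shows "inj_on (\<lambda>s. (s * a) mod r) {1..<r}" "(\<lambda>s. (s * a) mod r) ` {1..<r} \<subseteq> {1..<r}"
proof -
  show "inj_on (\<lambda>s. (s * a) mod r) {1..<r}"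
  proof (rule inj_onI)
    fix s1 s2 assume s: "s1 \<in> {1..<r}" "s2 \<in> {1..<r}" "(s1 * a) mod r = (s2 * a) mod r"
    then have "[s1 * a = s2 * a] (mod r)" by (simp only: cong_def)
    then have "[s1 = s2] (mod r)" using cong_mult_rcancel_nat[OF assms(1)] by (simp only:)
    then show "s1 = s2" using s by (simp add: cong_def)
  qed
  show "(\<lambda>s. (s * a) mod r) ` {1..<r} \<subseteq> {1..<r}"
  proof
    fix y assume "y \<in> (\<lambda>s. (s * a) mod r) ` {1..<r}"
    then obtain s where s: "s \<in> {1..<r}" "y = (s * a) mod r" by auto
    have "y \<noteq> 0"
    proof
      assume "y = 0"
      then have "r dvd s * a" using s by (simp add: mod_0_imp_dvd)
      moreover have "coprime r a" using assms(1) by (simp add: coprime_commute)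
      ultimately have "r dvd s" using coprime_dvd_mult_left_iff by auto
      then show False using s dvd_imp_le[of r s] by auto
    qed
    moreover have "y < r" using s assms by simp
    ultimately show "y \<in> {1..<r}" by simp
  qed
qed

lemma h2_bij:
  fixes a r :: nat
  assumes "coprime a r" "r > 1"
  shows "inj_on (tt r a) {1..<r}" "tt r a ` {1..<r} \<subseteq> {1..<r}"
proof -
  show "inj_on (tt r a) {1..<r}"
  proof (rule inj_onI)
    fix x y assume xy: "x \<in> {1..<r}" "y \<in> {1..<r}" "tt r a x = tt r a y"
    have "x < r" "y < r" "0 < r" using xy assms by auto
    then show "x = y" using tt_inj[of a r x y] assms(1) xy(3) by blast
  qed
  show "tt r a ` {1..<r} \<subseteq> {1..<r}"
  proof
    fix y assume "y \<in> tt r a ` {1..<r}"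
    then obtain s where s: "s \<in> {1..<r}" "y = tt r a s" by blast
    have "0 < s" "s < r" using s by auto
    then have "0 < tt r a s \<and> tt r a s < r" using tt_range[OF assms] by blast
    then show "y \<in> {1..<r}" using s by simp
  qed
qed

lemma sum_id_Suc: "2 * (\<Sum>p\<in>{1..<k}. int p) = int k * (int k - 1)"
proof (induction k)
  case 0 then show ?case by simp
next
  case (Suc k)
  show ?case
  proof (cases "k = 0")
    case True then show ?thesis by simp
  next
    case False
    then have "(\<Sum>p\<in>{1..<Suc k}. int p) = (\<Sum>p\<in>{1..<k}. int p) + int k" by simp
    then show ?thesis using Suc.IH by (simp add: algebra_simps)
  qed
qed

definition K :: "nat \<Rightarrow> int" where "K T = (\<Sum>p\<in>{1..<T}. int T - int p)"

lemma K_two: "2 * K T = int T * (int T - 1)"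
proof -
  have "K T = (\<Sum>p\<in>{1..<T}. int T) - (\<Sum>p\<in>{1..<T}. int p)" unfolding K_def by (rule sum_subtractf)
  also have "(\<Sum>p\<in>{1..<T}. int T) = int (T - 1) * int T" by simp
  finally have "2 * K T = 2 * int (T - 1) * int T - int T * (int T - 1)" using sum_id_Suc[of T] by simp
  then show ?thesis by (cases T) (simp_all add: algebra_simps)
qed

lemma sum_K: "6 * (\<Sum>y\<in>{1..<k}. K y) = int k * (int k - 1) * (int k - 2)"
proof (induction k)
  case 0 then show ?case by simp
next
  case (Suc k)
  show ?case
  proof (cases "k = 0")
    case True then show ?thesis by simp
  next
    case False
    then have "(\<Sum>y\<in>{1..<Suc k}. K y) = (\<Sum>y\<in>{1..<k}. K y) + K k" by simp
    then have "6 * (\<Sum>y\<in>{1..<Suc k}. K y) = int k * (int k - 1) * (int k - 2) + 3 * (2 * K k)"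
      using Suc.IH by simp
    then show ?thesis unfolding K_two by (simp add: algebra_simps)
  qed
qed

lemma tt_cong:
  fixes inv :: int and a r z :: nat
  assumes "coprime a r" "r > 0" "[inv * int a = 1] (mod int r)"
  shows "[int (tt r a z) = - int z * inv] (mod int r)"
proof -
  have "(z + tt r a z * a) mod r = 0" using tt_spec[OF assms(1,2)] by simp
  then have d: "int r dvd int z + int (tt r a z) * int a"
    by (metis of_nat_add of_nat_dvd_iff of_nat_mult mod_0_imp_dvd)
  have d2: "int r dvd inv * int a - 1" using assms(3) by (simp add: cong_iff_dvd_diff)
  have "int (tt r a z) - (- int z * inv) = inv * (int z + int (tt r a z) * int a) - int (tt r a z) * (inv * int a - 1)"
    by (simp add: algebra_simps)
  also have "int r dvd \<dots>" by (rule dvd_diff[OF dvd_mult[OF d] dvd_mult[OF d2]])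
  finally show ?thesis by (simp add: cong_iff_dvd_diff)
qed


lemma inj_mk: "inj_on (mk r m i x) S"
proof (rule inj_onI)
  fix a b assume "mk r m i x a = mk r m i x b"
  then have "map (\<lambda>e. fst (snd e)) (mk r m i x a) = map (\<lambda>e. fst (snd e)) (mk r m i x b)" by simp
  then show "a = b" by (simp only: mk_map)
qed

lemma Wk_disj: "U \<noteq> U' \<Longrightarrow> Wk r m i x U \<inter> Wk r m i x U' = {}"
  by (auto simp: Wk_memI)

lemma sum_nat_Suc: "2 * (\<Sum>p\<in>{1..<k}. p) = k * (k - 1::nat)"
proof -
  have "int (2 * (\<Sum>p\<in>{1..<k}. p)) = 2 * (\<Sum>p\<in>{1..<k}. int p)" by (simp add: of_nat_sum)
  also have "\<dots> = int k * (int k - 1)" by (rule sum_id_Suc)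
  also have "\<dots> = int (k * (k - 1))" by (cases k) (simp_all add: algebra_simps)
  finally show ?thesis by (simp only: of_nat_eq_iff)
qed

lemma S2:
  assumes "coprime a r" "coprime c r" "r > 1"
  shows "(\<Sum>s\<in>{1..<r}. tt r c ((0 + s * a) mod r)) = r * (r - 1) div 2"
proof -
  have "(\<Sum>s\<in>{1..<r}. tt r c ((0 + s * a) mod r)) = (\<Sum>s\<in>{1..<r}. tt r c ((s * a) mod r))" by simp
  also have "\<dots> = (\<Sum>s\<in>{1..<r}. tt r c s)" by (rule bij_sum[OF h1_bij[OF assms(1,3)]])
  also have "\<dots> = (\<Sum>s\<in>{1..<r}. s)" using bij_sum[OF h2_bij[OF assms(2,3)], of "\<lambda>s. s"] by simp
  also have "\<dots> = r * (r - 1) div 2" using sum_nat_Suc[of r] by simp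
  finally show ?thesis .
qed

definition FF :: "nat \<Rightarrow> nat \<Rightarrow> nat \<Rightarrow> nat \<Rightarrow> nat" where
  "FF r b c y = (\<Sum>p\<in>{1..<tt r b y}. tt r c ((y + p * b) mod r))"

lemma term_cong:
  fixes inv :: int and b c r y p :: nat
  assumes "coprime b r" "coprime c r" "r > 1" "[inv * int c = 1] (mod int r)"
  shows "[int (tt r c ((y + p * b) mod r)) = (int (tt r b y) - int p) * int b * inv] (mod int r)"
proof -
  define z where "z = (y + p * b) mod r"
  define T where "T = tt r b y"
  have r0: "r > 0" using assms by simp
  have d1: "int r dvd int (tt r c z) + int z * inv"
    using tt_cong[OF assms(2) r0 assms(4), of z] by (simp add: cong_iff_dvd_diff)
  have "int z = (int y + int p * int b) mod int r" unfolding z_def by (simp add: zmod_int)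
  then have d2: "int r dvd int z - (int y + int p * int b)"
    by (metis mod_mod_trivial cong_def cong_iff_dvd_diff)
  have "(y + T * b) mod r = 0" using tt_spec[OF assms(1) r0, of y] by (simp add: T_def)
  then have d3: "int r dvd int y + int T * int b"
    by (metis of_nat_add of_nat_dvd_iff of_nat_mult mod_0_imp_dvd)
  have "int (tt r c z) - (int T - int p) * int b * inv
      = (int (tt r c z) + int z * inv) - inv * (int z - (int y + int p * int b)) - inv * (int y + int T * int b)"
    by (simp add: algebra_simps)
  also have "int r dvd \<dots>" by (rule dvd_diff[OF dvd_diff[OF d1 dvd_mult[OF d2]] dvd_mult[OF d3]])
  finally show ?thesis unfolding z_def T_def by (simp add: cong_iff_dvd_diff)
qed

lemma FF_cong:
  fixes inv :: int and b c r y :: nat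
  assumes "coprime b r" "coprime c r" "r > 1" "[inv * int c = 1] (mod int r)"
  shows "[int (FF r b c y) = int b * inv * K (tt r b y)] (mod int r)"
proof -
  have "int (FF r b c y) = (\<Sum>p\<in>{1..<tt r b y}. int (tt r c ((y + p * b) mod r)))"
    unfolding FF_def by (simp add: of_nat_sum)
  also have "[\<dots> = (\<Sum>p\<in>{1..<tt r b y}. (int (tt r b y) - int p) * int b * inv)] (mod int r)"
    by (rule cong_sum) (rule term_cong[OF assms])
  also have "(\<Sum>p\<in>{1..<tt r b y}. (int (tt r b y) - int p) * int b * inv) = int b * inv * K (tt r b y)"
    unfolding K_def by (simp add: sum_distrib_left sum_distrib_right algebra_simps)
  finally show ?thesis .
qed

lemma S3:
  fixes inv :: int and a b c r :: nat
  assumes "coprime a r" "coprime b r" "coprime c r" "r > 1" "[inv * int c = 1] (mod int r)"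
  shows "[int (\<Sum>s\<in>{1..<r}. FF r b c ((0 + s * a) mod r))
     = - inv * int b * (int r * (int r - 1) * (int r - 2) div 3)] (mod int r)"
proof -
  define H where "H = (\<Sum>y\<in>{1..<r}. K y)"
  have "(\<Sum>s\<in>{1..<r}. FF r b c ((0 + s * a) mod r)) = (\<Sum>s\<in>{1..<r}. FF r b c ((s * a) mod r))" by simp
  also have "\<dots> = (\<Sum>y\<in>{1..<r}. FF r b c y)" by (rule bij_sum[OF h1_bij[OF assms(1,4)]])
  finally have e1: "int (\<Sum>s\<in>{1..<r}. FF r b c ((0 + s * a) mod r)) = (\<Sum>y\<in>{1..<r}. int (FF r b c y))"
    by (simp add: of_nat_sum)
  have "[(\<Sum>y\<in>{1..<r}. int (FF r b c y)) = (\<Sum>y\<in>{1..<r}. int b * inv * K (tt r b y))] (mod int r)"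
    by (rule cong_sum) (rule FF_cong[OF assms(2,3,4,5)])
  also have "(\<Sum>y\<in>{1..<r}. int b * inv * K (tt r b y)) = int b * inv * (\<Sum>y\<in>{1..<r}. K (tt r b y))"
    by (simp add: sum_distrib_left)
  also have "(\<Sum>y\<in>{1..<r}. K (tt r b y)) = H"
    unfolding H_def by (rule bij_sum[OF h2_bij[OF assms(2,4)]])
  finally have c1: "[int (\<Sum>s\<in>{1..<r}. FF r b c ((0 + s * a) mod r)) = int b * inv * H] (mod int r)"
    using e1 by simp
  have six: "6 * H = int r * (int r - 1) * (int r - 2)" unfolding H_def by (rule sum_K)
  then have div3: "int r * (int r - 1) * (int r - 2) div 3 = 2 * H" by simp
  define Q where "Q = (\<Sum>p\<in>{1..<r - 1}. int p)"
  have "2 * Q = int (r - 1) * (int (r - 1) - 1)" unfolding Q_def by (rule sum_id_Suc)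
  also have "\<dots> = (int r - 1) * (int r - 2)" using assms(4) by (simp add: of_nat_diff)
  finally have e2: "2 * Q = (int r - 1) * (int r - 2)" .
  have "2 * (3 * H) = 2 * (int r * Q)"
  proof -
    have "2 * (3 * H) = 6 * H" by simp
    also have "\<dots> = int r * ((int r - 1) * (int r - 2))" unfolding six by (simp only: mult.assoc)
    also have "\<dots> = int r * (2 * Q)" unfolding e2 ..
    also have "\<dots> = 2 * (int r * Q)" by (simp only: mult.left_commute)
    finally show ?thesis .
  qed
  then have h3: "3 * H = int r * Q" by simp
  have "int b * inv * H - (- inv * int b * (2 * H)) = int b * inv * (3 * H)" by (simp add: algebra_simps)
  also have "\<dots> = int r * (int b * inv * Q)" unfolding h3 by (simp add: algebra_simps)
  finally have eqd: "int b * inv * H - (- inv * int b * (2 * H)) = int r * (int b * inv * Q)" .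
  have "int r dvd int b * inv * H - (- inv * int b * (2 * H))" unfolding eqd by (rule dvd_triv_left)
  then have "[int b * inv * H = - inv * int b * (2 * H)] (mod int r)" by (simp add: cong_iff_dvd_diff)
  with c1 show ?thesis unfolding div3 by (rule cong_trans)
qed


lemma set_ne1: "x \<in> A \<Longrightarrow> x \<notin> B \<Longrightarrow> A \<noteq> B" by blast
lemma set_ne2: "x \<notin> A \<Longrightarrow> x \<in> B \<Longrightarrow> A \<noteq> B" by blast

lemma W2card:
  assumes "r \<ge> 2" "coprime (m i) r" "coprime (m j) r" "i < j"
  shows "finite (Wk r m i 0 {i,j}) \<and> card (Wk r m i 0 {i,j}) = r"
proof -
  have r1: "r > 1" "0 < r" using assms(1) by auto
  show ?thesis using Wk_card2[OF assms(4,2,3) r1(1) r1(2)] tt_zero[OF assms(2) r1(1)] by simp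
qed

lemma W3card:
  assumes "r \<ge> 2" "coprime (m i) r" "coprime (m b) r" "coprime (m j) r" "i < b" "b < j"
  shows "finite (Wk r m i 0 {i,b,j}) \<and> card (Wk r m i 0 {i,b,j}) = r * (r - 1) div 2"
proof -
  have r1: "r > 1" "0 < r" using assms(1) by auto
  show ?thesis using Wk_card3[OF assms(5,6,2,3,4) r1(1) r1(2)] tt_zero[OF assms(2) r1(1)]
      S2[OF assms(2,3) r1(1)] by simp
qed

lemma W4card:
  fixes inv :: int
  assumes "r \<ge> 2" "coprime (m i) r" "coprime (m (i+1)) r" "coprime (m (i+2)) r" "coprime (m (i+3)) r"
    "[inv * int (m (i + 2)) = 1] (mod int r)"
  shows "finite (Wk r m i 0 {i,i+1,i+2,i+3}) \<and>
     [int (card (Wk r m i 0 {i,i+1,i+2,i+3}))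
        = - inv * int (m (i + 1)) * (int r * (int r - 1) * (int r - 2) div 3)] (mod int r)"
proof -
  have r1: "r > 1" "0 < r" using assms(1) by auto
  have lt: "i < i+1" "i+1 < i+2" "i+2 < i+3" by simp_all
  note w4 = Wk_card4[OF lt assms(2,3,4,5) r1(1) r1(2)]
  have "card (Wk r m i 0 {i,i+1,i+2,i+3}) = (\<Sum>s\<in>{1..<r}. card (Wk r m (i+1) ((0 + s * m i) mod r) {i+1,i+2,i+3}))"
    using w4 tt_zero[OF assms(2) r1(1)] by simp
  also have "\<dots> = (\<Sum>s\<in>{1..<r}. FF r (m (i+1)) (m (i+2)) ((0 + s * m i) mod r))"
  proof (rule sum.cong[OF refl])
    fix s
    have "(0 + s * m i) mod r < r" using r1 by simp
    then show "card (Wk r m (i+1) ((0 + s * m i) mod r) {i+1,i+2,i+3}) = FF r (m (i+1)) (m (i+2)) ((0 + s * m i) mod r)"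
      using Wk_card3[OF lt(2,3) assms(3,4,5) r1(1)] unfolding FF_def by blast
  qed
  finally have c: "card (Wk r m i 0 {i,i+1,i+2,i+3}) = (\<Sum>s\<in>{1..<r}. FF r (m (i+1)) (m (i+2)) ((0 + s * m i) mod r))" .
  show ?thesis using w4 S3[OF assms(2,3,4) r1(1) assms(6)] unfolding c by simp
qed

theorem lemma7p5:
  fixes n r :: nat and m :: "nat \<Rightarrow> nat"
  assumes r2: "r \<ge> 2"
    and cop: "\<And>i. 1 \<le> i \<Longrightarrow> i \<le> n \<Longrightarrow> coprime (m i) r"
  shows
    "(\<forall>i j. 1 \<le> i \<and> i + 1 \<le> j \<and> j \<le> n \<longrightarrow> card (kzs_paths n r m 1 i j) = r)
   \<and> (\<forall>i j. 1 \<le> i \<and> i + 2 \<le> j \<and> j \<le> n \<longrightarrow>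
        card (kzs_paths n r m 2 i j) = r * (r - 1) div 2 * (j - i - 1))
   \<and> (\<forall>i. 1 \<le> i \<and> i + 3 \<le> n \<longrightarrow> finite (kzs_paths n r m 3 i (i + 3)) \<and>
        (\<forall>inv :: int. [inv * int (m (i + 2)) = 1] (mod int r) \<longrightarrow>
          [int (card (kzs_paths n r m 3 i (i + 3)))
             = - inv * int (m (i + 1)) * (int r * (int r - 1) * (int r - 2) div 3)] (mod int r)))
   \<and> (\<forall>i. 1 \<le> i \<and> i + 2 \<le> n \<longrightarrow> card (zs_paths n r m i (i + 2)) = r * (r + 1) div 2)
   \<and> (\<forall>i. 1 \<le> i \<and> i + 3 \<le> n \<longrightarrow> finite (zs_paths n r m i (i + 3)) \<and>
        (\<forall>inv :: int. [inv * int (m (i + 2)) = 1] (mod int r) \<longrightarrow>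
          [int (card (zs_paths n r m i (i + 3)))
             = - inv * int (m (i + 1)) * (int r * (int r - 1) * (int r - 2) div 3)] (mod int r)))"
proof -
  have r1: "r > 1" using r2 by simp
  have P1: "card (kzs_paths n r m 1 i j) = r" if h: "1 \<le> i" "i + 1 \<le> j" "j \<le> n" for i j
  proof -
    have ij: "i < j" using h by simp
    have "kzs_paths n r m 1 i j = mk r m i 0 ` Wk r m i 0 {i,j}"
      unfolding kzs_eq[OF r1 h(1)] K1[OF ij h(3)] ..
    then have "card (kzs_paths n r m 1 i j) = card (Wk r m i 0 {i,j})" by (simp add: card_image inj_mk)
    also have "\<dots> = r" using W2card[OF r2 _ _ ij] cop h by simp
    finally show ?thesis .
  qed
  have P2: "card (kzs_paths n r m 2 i j) = r * (r - 1) div 2 * (j - i - 1)" if h: "1 \<le> i" "i + 2 \<le> j" "j \<le> n" for i j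
  proof -
    have ij: "i < j" using h by simp
    have "kzs_paths n r m 2 i j = mk r m i 0 ` (\<Union>b\<in>{i<..<j}. Wk r m i 0 {i,b,j})"
      unfolding kzs_eq[OF r1 h(1)] K2[OF ij h(3)] ..
    then have "card (kzs_paths n r m 2 i j) = card (\<Union>b\<in>{i<..<j}. Wk r m i 0 {i,b,j})" by (simp add: card_image inj_mk)
    also have "\<dots> = (\<Sum>b\<in>{i<..<j}. card (Wk r m i 0 {i,b,j}))"
    proof (rule card_UN_disjoint)
      show "finite {i<..<j}" by simp
      show "\<forall>b\<in>{i<..<j}. finite (Wk r m i 0 {i, b, j})"
      proof
        fix b assume "b \<in> {i<..<j}"
        then have "coprime (m i) r" "coprime (m b) r" "coprime (m j) r" "i < b" "b < j" using cop h by auto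
        then show "finite (Wk r m i 0 {i, b, j})" using W3card[OF r2] by blast
      qed
      show "\<forall>b\<in>{i<..<j}. \<forall>b'\<in>{i<..<j}. b \<noteq> b' \<longrightarrow> Wk r m i 0 {i, b, j} \<inter> Wk r m i 0 {i, b', j} = {}"
      proof (intro ballI impI)
        fix b b' assume bb: "b \<in> {i<..<j}" "b' \<in> {i<..<j}" "b \<noteq> b'"
        have "{i, b, j} \<noteq> {i, b', j}"
        proof
          assume "{i, b, j} = {i, b', j}"
          moreover have "b \<in> {i, b, j}" by simp
          ultimately have "b \<in> {i, b', j}" by simp
          then show False using bb by auto
        qed
        then show "Wk r m i 0 {i, b, j} \<inter> Wk r m i 0 {i, b', j} = {}" by (rule Wk_disj)
      qed
    qed
    also have "\<dots> = (\<Sum>b\<in>{i<..<j}. r * (r - 1) div 2)"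
    proof (rule sum.cong[OF refl])
      fix b assume "b \<in> {i<..<j}"
      then have "coprime (m i) r" "coprime (m b) r" "coprime (m j) r" "i < b" "b < j" using cop h by auto
      then show "card (Wk r m i 0 {i,b,j}) = r * (r - 1) div 2" using W3card[OF r2] by blast
    qed
    also have "\<dots> = r * (r - 1) div 2 * (j - i - 1)" by simp
    finally show ?thesis .
  qed
  have P3: "finite (Wk r m i 0 {i,i+1,i+2,i+3}) \<and>
     (\<forall>inv :: int. [inv * int (m (i + 2)) = 1] (mod int r) \<longrightarrow>
     [int (card (Wk r m i 0 {i,i+1,i+2,i+3}))
        = - inv * int (m (i + 1)) * (int r * (int r - 1) * (int r - 2) div 3)] (mod int r))"
    if h: "1 \<le> i" "i + 3 \<le> n" for i
  proof -
    have c: "coprime (m i) r" "coprime (m (i+1)) r" "coprime (m (i+2)) r" "coprime (m (i+3)) r" using cop h by auto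
    show ?thesis
    proof (intro conjI allI impI)
      show "finite (Wk r m i 0 {i,i+1,i+2,i+3})" using Wk_card4[of i "i+1" "i+2" "i+3" m r 0] c r1 by simp
      fix inv :: int assume inv: "[inv * int (m (i + 2)) = 1] (mod int r)"
      show "[int (card (Wk r m i 0 {i,i+1,i+2,i+3}))
        = - inv * int (m (i + 1)) * (int r * (int r - 1) * (int r - 2) div 3)] (mod int r)"
        using W4card[OF r2 c inv] by simp
    qed
  qed
  have K3': "kzs_paths n r m 3 i (i + 3) = mk r m i 0 ` Wk r m i 0 {i,i+1,i+2,i+3}"
    if h: "1 \<le> i" "i + 3 \<le> n" for i
    unfolding kzs_eq[OF r1 h(1)] K3[OF h(2)] ..
  have even: "r * (r - 1) div 2 * 2 = r * (r - 1)"
  proof -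
    have e: "r * (r - 1) = 2 * (\<Sum>p\<in>{1..<r}. p)" using sum_nat_Suc[of r] by simp
    show ?thesis unfolding e by simp
  qed
  have P4: "card (zs_paths n r m i (i + 2)) = r * (r + 1) div 2" if h: "1 \<le> i" "i + 2 \<le> n" for i
  proof -
    have ci: "coprime (m i) r" "coprime (m (i+1)) r" "coprime (m (i+2)) r" using cop h by auto
    have w2: "finite (Wk r m i 0 {i,i+2}) \<and> card (Wk r m i 0 {i,i+2}) = r"
      using W2card[of r m i "i+2"] r2 ci(1) ci(3) by simp
    have w3: "finite (Wk r m i 0 {i,i+1,i+2}) \<and> card (Wk r m i 0 {i,i+1,i+2}) = r * (r - 1) div 2"
      using W3card[of r m i "i+1" "i+2"] r2 ci(1) ci(2) ci(3) by simp
    have "zs_paths n r m i (i + 2) = mk r m i 0 ` (Wk r m i 0 {i,i+2} \<union> Wk r m i 0 {i,i+1,i+2})"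
      unfolding zs_char[OF r1 h(1)] Z2[OF h(2)] ..
    then have "card (zs_paths n r m i (i + 2)) = card (Wk r m i 0 {i,i+2} \<union> Wk r m i 0 {i,i+1,i+2})"
      by (simp add: card_image inj_mk)
    also have "\<dots> = card (Wk r m i 0 {i,i+2}) + card (Wk r m i 0 {i,i+1,i+2})"
    proof (rule card_Un_disjoint)
      show "finite (Wk r m i 0 {i, i + 2})" using w2 by simp
      show "finite (Wk r m i 0 {i, i + 1, i + 2})" using w3 by simp
      show "Wk r m i 0 {i, i + 2} \<inter> Wk r m i 0 {i, i + 1, i + 2} = {}"
        by (rule Wk_disj, rule set_ne2[of "i+1"]) auto
    qed
    also have "\<dots> = r + r * (r - 1) div 2"
      using w2 w3 by simp
    also have "\<dots> = r * (r + 1) div 2"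
    proof -
      have "r * (r + 1) = r * (r - 1) + 2 * r" using r1 by (cases r) (simp_all add: algebra_simps)
      then show ?thesis using even by simp
    qed
    finally show ?thesis .
  qed
  have P5: "finite (zs_paths n r m i (i + 3)) \<and>
        (\<forall>inv :: int. [inv * int (m (i + 2)) = 1] (mod int r) \<longrightarrow>
          [int (card (zs_paths n r m i (i + 3)))
             = - inv * int (m (i + 1)) * (int r * (int r - 1) * (int r - 2) div 3)] (mod int r))"
    if h: "1 \<le> i" "i + 3 \<le> n" for i
  proof -
    have ci: "coprime (m i) r" "coprime (m (i+1)) r" "coprime (m (i+2)) r" "coprime (m (i+3)) r" using cop h by auto
    define W1 where "W1 = Wk r m i 0 {i,i+3}"
    define W2 where "W2 = Wk r m i 0 {i,i+1,i+3}"
    define W3 where "W3 = Wk r m i 0 {i,i+2,i+3}"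
    define W4 where "W4 = Wk r m i 0 {i,i+1,i+2,i+3}"
    have e: "zs_paths n r m i (i + 3) = mk r m i 0 ` (W1 \<union> W2 \<union> W3 \<union> W4)"
      unfolding zs_char[OF r1 h(1)] Z3[OF h(2)] W1_def W2_def W3_def W4_def ..
    have f1: "finite W1" "card W1 = r" unfolding W1_def using W2card[of r m i "i+3"] r2 ci(1) ci(4) by simp_all
    have f2: "finite W2" "card W2 = r * (r - 1) div 2" unfolding W2_def
      using W3card[of r m i "i+1" "i+3"] r2 ci(1) ci(2) ci(4) by simp_all
    have f3: "finite W3" "card W3 = r * (r - 1) div 2" unfolding W3_def
      using W3card[of r m i "i+2" "i+3"] r2 ci(1) ci(3) ci(4) by simp_all
    have f4: "finite W4" using P3[OF h] unfolding W4_def by simp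
    have d12: "W1 \<inter> W2 = {}" unfolding W1_def W2_def by (rule Wk_disj, rule set_ne2[of "i+1"]) auto
    have d13: "W1 \<inter> W3 = {}" unfolding W1_def W3_def by (rule Wk_disj, rule set_ne2[of "i+2"]) auto
    have d14: "W1 \<inter> W4 = {}" unfolding W1_def W4_def by (rule Wk_disj, rule set_ne2[of "i+1"]) auto
    have d23: "W2 \<inter> W3 = {}" unfolding W2_def W3_def by (rule Wk_disj, rule set_ne1[of "i+1"]) auto
    have d24: "W2 \<inter> W4 = {}" unfolding W2_def W4_def by (rule Wk_disj, rule set_ne2[of "i+2"]) auto
    have d34: "W3 \<inter> W4 = {}" unfolding W3_def W4_def by (rule Wk_disj, rule set_ne2[of "i+1"]) auto
    have fin: "finite (W1 \<union> W2 \<union> W3 \<union> W4)" using f1 f2 f3 f4 by simp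
    have "card (W1 \<union> W2 \<union> W3 \<union> W4) = card (W1 \<union> W2 \<union> W3) + card W4"
      by (rule card_Un_disjoint) (use f1 f2 f3 f4 d14 d24 d34 in auto)
    also have "card (W1 \<union> W2 \<union> W3) = card (W1 \<union> W2) + card W3"
      by (rule card_Un_disjoint) (use f1 f2 f3 d13 d23 in auto)
    also have "card (W1 \<union> W2) = card W1 + card W2"
      by (rule card_Un_disjoint) (use f1 f2 d12 in auto)
    finally have c0: "card (W1 \<union> W2 \<union> W3 \<union> W4) = card W1 + card W2 + card W3 + card W4" .
    have rr: "r + r * (r - 1) = r * r" using r1 by (cases r) (simp_all add: algebra_simps)
    have c: "card (W1 \<union> W2 \<union> W3 \<union> W4) = r * r + card W4"
      unfolding c0 f1(2) f2(2) f3(2) using even rr by linarith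
    have cz: "card (zs_paths n r m i (i + 3)) = r * r + card W4"
      unfolding e using c by (simp add: card_image inj_mk)
    show ?thesis
    proof (intro conjI allI impI)
      show "finite (zs_paths n r m i (i + 3))" unfolding e using fin by simp
      fix inv :: int assume inv: "[inv * int (m (i + 2)) = 1] (mod int r)"
      have "[int (card (zs_paths n r m i (i + 3))) = int (card W4)] (mod int r)"
        unfolding cz by (simp add: cong_def)
      also have "[int (card W4) = - inv * int (m (i + 1)) * (int r * (int r - 1) * (int r - 2) div 3)] (mod int r)"
        using P3[OF h] inv unfolding W4_def by blast
      finally show "[int (card (zs_paths n r m i (i + 3)))
             = - inv * int (m (i + 1)) * (int r * (int r - 1) * (int r - 2) div 3)] (mod int r)" .
    qed
  qed
  show ?thesis
  proof (intro conjI allI impI)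
    fix i j assume "1 \<le> i \<and> i + 1 \<le> j \<and> j \<le> n"
    then show "card (kzs_paths n r m 1 i j) = r" using P1 by blast
  next
    fix i j assume "1 \<le> i \<and> i + 2 \<le> j \<and> j \<le> n"
    then show "card (kzs_paths n r m 2 i j) = r * (r - 1) div 2 * (j - i - 1)" using P2 by blast
  next
    fix i assume h: "1 \<le> i \<and> i + 3 \<le> n"
    then show "finite (kzs_paths n r m 3 i (i + 3))" using K3' P3 by simp
  next
    fix i and inv :: int assume h: "1 \<le> i \<and> i + 3 \<le> n" and inv: "[inv * int (m (i + 2)) = 1] (mod int r)"
    have "card (kzs_paths n r m 3 i (i + 3)) = card (Wk r m i 0 {i,i+1,i+2,i+3})"
      using K3' h by (simp add: card_image inj_mk)
    then show "[int (card (kzs_paths n r m 3 i (i + 3)))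
             = - inv * int (m (i + 1)) * (int r * (int r - 1) * (int r - 2) div 3)] (mod int r)"
      using P3 h inv by simp
  next
    fix i assume "1 \<le> i \<and> i + 2 \<le> n"
    then show "card (zs_paths n r m i (i + 2)) = r * (r + 1) div 2" using P4 by blast
  next
    fix i assume "1 \<le> i \<and> i + 3 \<le> n"
    then show "finite (zs_paths n r m i (i + 3))" using P5 by blast
  next
    fix i and inv :: int assume "1 \<le> i \<and> i + 3 \<le> n" "[inv * int (m (i + 2)) = 1] (mod int r)"
    then show "[int (card (zs_paths n r m i (i + 3)))
             = - inv * int (m (i + 1)) * (int r * (int r - 1) * (int r - 2) div 3)] (mod int r)"
      using P5 by blast
  qed
qed


end
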